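(* Consider the reaction–diffusion system $$u_t-d_1\Delta u=(f(u)-\lambda v)\varphi(u),\qquad v_t-d_2\Delta v=\sigma(g(u)-v)\varphi(u)\quad\text{in }\mathbb{R}^+\times\Omega,$$ with homogeneous Neumann boundary conditions, under the standing assumptions in the context, and assume $0<f'(\alpha)<\min\{\sigma,\lambda g'(\alpha)\}$. Let $F_0=f'(\alpha)\varphi(\alpha)$. If either $\mu_1d_1\ge F_0$, or $\mu_1 d_1<F_0$ and $0<d_2/\sigma<d$, then the constant steady state $(u^*,v^* )=(\alpha,g(\alpha))$ is locally asymptotically stable. If $\mu_1d_1<F_0$ and $d<d_2/\sigma$, then $(u^*,v^* )$ is unstable.
   Context: $\Omega\subset\mathbb{R}^n$ is a bounded domain with smooth boundary, $\nu$ the outer unit normal. The constants $d_1,d_2,\lambda,\sigma$ are strictly positive. The functions $\varphi,f,g$ are continuously differentiable on $[0,\infty)$, and there is $\delta>0$ with $\varphi(0)=0$, $f(\delta)=0$, $g(u),f(u),\varphi(u)>0$ and $g'(u)\ge0$ for $u\in(0,\delta)$; there is $\alpha\in(0,\delta)$ with $\lambda g(\alpha)=f(\alpha)$ and $(\alpha-u)[f(u)-\lambda g(u)]>0$ for $u\in(0,\alpha)\cup(\alpha,\delta)$. Let $0=\mu_0<\mu_1\le\mu_2\le\cdots$, $\mu_i\to\infty$, be the eigenvalues of $-\Delta$ on $\Omega$ with homogeneous Neumann boundary conditions. When $d_1\mu_1<F_0$, let $i_\alpha$ be the largest positive integer such that $d_1\mu_i<F_0$ for all $i\le i_\alpha$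 (so $1\le i_\alpha<\infty$), set $$\widetilde d_i=\varphi(\alpha)\,\frac{\mu_i d_1+\varphi(\alpha)\big(\lambda g'(\alpha)-f'(\alpha)\big)}{\mu_i\,(F_0-\mu_i d_1)},\qquad d=\min_{1\le i\le i_\alpha}\widetilde d_i .$$ Stability is understood via linearization: with the operator $L=\begin{pmatrix} d_1\Delta+f'(\alpha)\varphi(\alpha) & -\lambda\varphi(\alpha)\\ \sigma g'(\alpha)\varphi(\alpha) & d_2\Delta-\sigma\varphi(\alpha)\end{pmatrix}$ acting on pairs of functions with homogeneous Neumann boundary conditions, the steady state is locally asymptotically stable if all eigenvalues of $L$ have negative real part, and unstable if some eigenvalue of $L$ has positive real part. *)

theory Defs
  imports "HOL-Analysis.Analysis"
begin

definition partial :: "'n::finite \<Rightarrow> (real^'n \<Rightarrow> 'b::real_normed_vector) \<Rightarrow> real^'n \<Rightarrow> 'b" where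
  "partial i w x = frechet_derivative w (at x) (axis i 1)"

fun Ck :: "nat \<Rightarrow> (real^'n::finite \<Rightarrow> 'b::real_normed_vector) \<Rightarrow> (real^'n) set \<Rightarrow> bool" where
  "Ck 0 w S = continuous_on S w"
| "Ck (Suc k) w S = (continuous_on S w \<and> (\<forall>x\<in>S. w differentiable (at x)) \<and> (\<forall>i. Ck k (partial i w) S))"

definition smooth_fun :: "(real^'n::finite \<Rightarrow> real) \<Rightarrow> bool" where
  "smooth_fun w \<longleftrightarrow> (\<forall>k. Ck k w UNIV)"

definition laplacian :: "(real^'n::finite \<Rightarrow> 'b::real_normed_vector) \<Rightarrow> real^'n \<Rightarrow> 'b" where
  "laplacian w x = (\<Sum>i\<in>UNIV. partial i (partial i w) x)"

definition grad :: "(real^'n::finite \<Rightarrow> real) \<Rightarrow> real^'n \<Rightarrow> real^'n" where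
  "grad r x = (\<chi> i. partial i r x)"

definition smooth_domain :: "(real^'n::finite) set \<Rightarrow> (real^'n \<Rightarrow> real) \<Rightarrow> bool" where
  "smooth_domain \<Omega> \<rho> \<longleftrightarrow> \<Omega> \<noteq> {} \<and> bounded \<Omega> \<and> connected \<Omega> \<and> smooth_fun \<rho> \<and>
      \<Omega> = {x. \<rho> x < 0} \<and> (\<forall>x. \<rho> x = 0 \<longrightarrow> grad \<rho> x \<noteq> 0)"

definition outer_normal :: "(real^'n::finite \<Rightarrow> real) \<Rightarrow> real^'n \<Rightarrow> real^'n" where
  "outer_normal \<rho> x = grad \<rho> x /\<^sub>R norm (grad \<rho> x)"

text \<open>Admissible functions: classical C^2 functions (extended to the whole space) satisfying the
  homogeneous Neumann condition \<partial>w/\<partial>\<nu> = 0 on \<partial>\<Omega>.\<close>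
definition neumann_fun :: "(real^'n::finite) set \<Rightarrow> (real^'n \<Rightarrow> real) \<Rightarrow> (real^'n \<Rightarrow> 'b::real_normed_vector) \<Rightarrow> bool" where
  "neumann_fun \<Omega> \<rho> w \<longleftrightarrow> Ck 2 w UNIV \<and>
      (\<forall>x\<in>frontier \<Omega>. frechet_derivative w (at x) (outer_normal \<rho> x) = 0)"

definition neumann_eigenfun :: "(real^'n::finite) set \<Rightarrow> (real^'n \<Rightarrow> real) \<Rightarrow> real \<Rightarrow> (real^'n \<Rightarrow> real) \<Rightarrow> bool" where
  "neumann_eigenfun \<Omega> \<rho> \<mu> w \<longleftrightarrow> neumann_fun \<Omega> \<rho> w \<and> (\<forall>x\<in>\<Omega>. - laplacian w x = \<mu> * w x)"

definition lin_indep_on :: "'a set \<Rightarrow> nat \<Rightarrow> (nat \<Rightarrow> 'a \<Rightarrow> real) \<Rightarrow> bool" where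
  "lin_indep_on S k ws \<longleftrightarrow>
     (\<forall>c :: nat \<Rightarrow> real. (\<forall>x\<in>S. (\<Sum>j<k. c j * ws j x) = 0) \<longrightarrow> (\<forall>j<k. c j = 0))"

text \<open>\<mu> is the nondecreasing enumeration, counted with multiplicity, of the Neumann eigenvalues
  of -\<Delta> on \<Omega>: its range is exactly the set of eigenvalues, and each eigenvalue occurs as many
  times as the dimension of its eigenspace.\<close>
definition neumann_eigenvalues :: "(real^'n::finite) set \<Rightarrow> (real^'n \<Rightarrow> real) \<Rightarrow> (nat \<Rightarrow> real) \<Rightarrow> bool" where
  "neumann_eigenvalues \<Omega> \<rho> \<mu> \<longleftrightarrow> mono \<mu> \<and>
     (\<forall>m. (\<exists>i. \<mu> i = m) \<longleftrightarrow> (\<exists>w. neumann_eigenfun \<Omega> \<rho> m w \<and> (\<exists>x\<in>\<Omega>. w x \<noteq> 0))) \<and>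
     (\<forall>m k. (\<exists>ws. (\<forall>j<k. neumann_eigenfun \<Omega> \<rho> m (ws j)) \<and> lin_indep_on \<Omega> k ws)
              \<longleftrightarrow> k \<le> card {i. \<mu> i = m})"

text \<open>\<xi> is an eigenvalue of
  L = [[d1 \<Delta> + a11, a12], [a21, d2 \<Delta> + a22]] on pairs of (complex-valued) functions with
  homogeneous Neumann boundary conditions.\<close>
definition L_eigenvalue :: "(real^'n::finite) set \<Rightarrow> (real^'n \<Rightarrow> real) \<Rightarrow> real \<Rightarrow> real \<Rightarrow>
    real \<Rightarrow> real \<Rightarrow> real \<Rightarrow> real \<Rightarrow> complex \<Rightarrow> bool" where
  "L_eigenvalue \<Omega> \<rho> d1 d2 a11 a12 a21 a22 \<xi> \<longleftrightarrow>
     (\<exists>w1 w2 :: real^'n \<Rightarrow> complex.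
        neumann_fun \<Omega> \<rho> w1 \<and> neumann_fun \<Omega> \<rho> w2 \<and>
        (\<exists>x\<in>\<Omega>. w1 x \<noteq> 0 \<or> w2 x \<noteq> 0) \<and>
        (\<forall>x\<in>\<Omega>. of_real d1 * laplacian w1 x + of_real a11 * w1 x + of_real a12 * w2 x = \<xi> * w1 x) \<and>
        (\<forall>x\<in>\<Omega>. of_real a21 * w1 x + of_real d2 * laplacian w2 x + of_real a22 * w2 x = \<xi> * w2 x))"

definition L_stable where
  "L_stable \<Omega> \<rho> d1 d2 a11 a12 a21 a22 \<longleftrightarrow>
     (\<forall>\<xi>. L_eigenvalue \<Omega> \<rho> d1 d2 a11 a12 a21 a22 \<xi> \<longrightarrow> Re \<xi> < 0)"

definition L_unstable where
  "L_unstable \<Omega> \<rho> d1 d2 a11 a12 a21 a22 \<longleftrightarrow>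
     (\<exists>\<xi>. L_eigenvalue \<Omega> \<rho> d1 d2 a11 a12 a21 a22 \<xi> \<and> Re \<xi> > 0)"

definition i_alpha :: "real \<Rightarrow> (nat \<Rightarrow> real) \<Rightarrow> real \<Rightarrow> nat" where
  "i_alpha d1 \<mu> F0 = Max {i. 1 \<le> i \<and> (\<forall>j\<in>{1..i}. d1 * \<mu> j < F0)}"

text \<open>tilde d_i, with parameters phi(alpha), lambda g'(alpha) - f'(alpha), d1, mu, F0.\<close>
definition d_tilde :: "real \<Rightarrow> real \<Rightarrow> real \<Rightarrow> (nat \<Rightarrow> real) \<Rightarrow> real \<Rightarrow> nat \<Rightarrow> real" where
  "d_tilde pa c d1 \<mu> F0 i = pa * (\<mu> i * d1 + pa * c) / (\<mu> i * (F0 - \<mu> i * d1))"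

definition d_crit :: "real \<Rightarrow> real \<Rightarrow> real \<Rightarrow> (nat \<Rightarrow> real) \<Rightarrow> real \<Rightarrow> real" where
  "d_crit pa c d1 \<mu> F0 = Min (d_tilde pa c d1 \<mu> F0 ` {1..i_alpha d1 \<mu> F0})"

end

theory Submission
  imports Defs
begin

definition C1 :: "(real^'n::finite \<Rightarrow> real) \<Rightarrow> bool" where
  "C1 w \<longleftrightarrow> (\<forall>x. w differentiable (at x)) \<and> (\<forall>j. continuous_on UNIV (partial j w))"

lemma partial_eq:
  assumes "(w has_derivative D) (at x)"
  shows "partial i w x = D (axis i 1)"
  using frechet_derivative_at[OF assms] by (simp add: partial_def)

lemma has_derivative_frechet:
  assumes "w differentiable (at x)"
  shows "(w has_derivative frechet_derivative w (at x)) (at x)"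
  using assms frechet_derivative_works by blast

lemma Ck_cont: "Ck k w S \<Longrightarrow> continuous_on S w"
  by (cases k) auto

lemma Ck_Suc_C1: "Ck (Suc k) w UNIV \<Longrightarrow> C1 w"
  unfolding C1_def by (auto intro: Ck_cont[of k])

lemma Ck2_C1_partial: "Ck 2 w UNIV \<Longrightarrow> C1 (partial i w)"
  by (auto simp: numeral_2_eq_2 C1_def)

lemma C1_diff: "C1 w \<Longrightarrow> w differentiable (at x)"
  by (simp add: C1_def)

lemma C1_cont: "C1 w \<Longrightarrow> continuous_on UNIV w"
  by (meson C1_def continuous_at_imp_continuous_on differentiable_imp_continuous_within)

lemma C1_partial_cont: "C1 w \<Longrightarrow> continuous_on UNIV (partial j w)"
  by (simp add: C1_def)

lemma C1_mult:
  assumes "C1 w" "C1 v"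
  shows "C1 (\<lambda>x. w x * v x)"
    and "partial j (\<lambda>x. w x * v x) x = partial j w x * v x + w x * partial j v x"
proof -
  have D: "((\<lambda>x. w x * v x) has_derivative
     (\<lambda>h. w x * frechet_derivative v (at x) h + frechet_derivative w (at x) h * v x)) (at x)" for x
    using has_derivative_mult[OF has_derivative_frechet[OF C1_diff[OF assms(1)]]
        has_derivative_frechet[OF C1_diff[OF assms(2)]]] .
  have P: "partial j (\<lambda>x. w x * v x) x = partial j w x * v x + w x * partial j v x" for x j
    using partial_eq[OF D[of x], of j] by (simp add: partial_def)
  then show "partial j (\<lambda>x. w x * v x) x = partial j w x * v x + w x * partial j v x" .
  show "C1 (\<lambda>x. w x * v x)"
    unfolding C1_def
  proof (intro conjI allI)
    show "(\<lambda>x. w x * v x) differentiable at x" for x using D differentiableI by blast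
    show "continuous_on UNIV (partial j (\<lambda>x. w x * v x))" for j
      unfolding P[abs_def]
      using assms by (intro continuous_intros C1_cont C1_partial_cont) 
  qed
qed

lemma C1_add:
  assumes "C1 w" "C1 v"
  shows "C1 (\<lambda>x. w x + v x)"
    and "partial j (\<lambda>x. w x + v x) x = partial j w x + partial j v x"
proof -
  have D: "((\<lambda>x. w x + v x) has_derivative
     (\<lambda>h. frechet_derivative w (at x) h + frechet_derivative v (at x) h)) (at x)" for x
    using has_derivative_add[OF has_derivative_frechet[OF C1_diff[OF assms(1)]]
        has_derivative_frechet[OF C1_diff[OF assms(2)]]] .
  have P: "partial j (\<lambda>x. w x + v x) x = partial j w x + partial j v x" for x j
    using partial_eq[OF D[of x], of j] by (simp add: partial_def)
  then show "partial j (\<lambda>x. w x + v x) x = partial j w x + partial j v x" .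
  show "C1 (\<lambda>x. w x + v x)"
    unfolding C1_def
  proof (intro conjI allI)
    show "(\<lambda>x. w x + v x) differentiable at x" for x using D differentiableI by blast
    show "continuous_on UNIV (partial j (\<lambda>x. w x + v x))" for j
      unfolding P[abs_def]
      using assms by (intro continuous_intros C1_cont C1_partial_cont) 
  qed
qed

lemma partial_const: "partial j (\<lambda>x::real^'n::finite. c) x = (0::real)"
  using partial_eq[of "\<lambda>x::real^'n. c" "\<lambda>h. 0" x j] by simp

lemma C1_const: "C1 (\<lambda>x::real^'n::finite. c)"
  unfolding C1_def partial_const by auto

lemma C1_comp:
  assumes "C1 w" and hder: "\<And>t. (h has_real_derivative h' t) (at t)" and hcut: "continuous_on UNIV h'"
  shows "C1 (\<lambda>x. h (w x))"
    and "partial j (\<lambda>x. h (w x)) x = h' (w x) * partial j w x"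
proof -
  have D: "((\<lambda>x. h (w x)) has_derivative
     (\<lambda>v. h' (w x) * frechet_derivative w (at x) v)) (at x)" for x
    using has_derivative_compose[OF has_derivative_frechet[OF C1_diff[OF assms(1)]] hder[unfolded has_field_derivative_def]]
    by (simp add: mult.commute)
  have P: "partial j (\<lambda>x. h (w x)) x = h' (w x) * partial j w x" for x j
    using partial_eq[OF D[of x], of j] by (simp add: partial_def)
  then show "partial j (\<lambda>x. h (w x)) x = h' (w x) * partial j w x" .
  show "C1 (\<lambda>x. h (w x))"
    unfolding C1_def
  proof (intro conjI allI)
    show "(\<lambda>x. h (w x)) differentiable at x" for x using D differentiableI by blast
    show "continuous_on UNIV (partial j (\<lambda>x. h (w x)))" for j
      unfolding P[abs_def]
      using assms C1_cont[OF assms(1)] 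
      by (intro continuous_intros C1_partial_cont continuous_on_compose2[OF hcut]) auto
  qed
qed

lemma cbox_big:
  obtains a b :: "real^'n::finite" where "cball 0 R \<subseteq> cbox a b"
  using bounded_subset_cbox_symmetric[OF bounded_cball[of 0 R]] by blast

lemma supp_integrable:
  fixes f :: "real^'n::finite \<Rightarrow> real"
  assumes "continuous_on UNIV f" "\<And>x. R < norm x \<Longrightarrow> f x = 0"
  shows "f integrable_on UNIV"
proof -
  obtain a b :: "real^'n" where ab: "cball 0 R \<subseteq> cbox a b" by (rule cbox_big)
  have "f integrable_on cbox a b"
    by (rule integrable_continuous) (rule continuous_on_subset[OF assms(1)], simp)
  moreover have "x \<notin> cbox a b \<Longrightarrow> f x = 0" for x
    by (meson ab assms(2) mem_cball_0 not_le subsetD)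
  ultimately show ?thesis by (rule integrable_on_superset) auto
qed

lemma supp_translate:
  fixes f :: "real^'n::finite \<Rightarrow> real"
  assumes "continuous_on UNIV f" "\<And>x. R < norm x \<Longrightarrow> f x = 0"
  shows "integral UNIV (\<lambda>x. f (x + c)) = integral UNIV f"
proof -
  obtain a b :: "real^'n" where ab: "cball 0 R \<subseteq> cbox a b" by (rule cbox_big)
  have z: "x \<notin> cbox a b \<Longrightarrow> f x = 0" for x
    by (meson ab assms(2) mem_cball_0 not_le subsetD)
  have "f integrable_on cbox a b"
    by (rule integrable_continuous) (rule continuous_on_subset[OF assms(1)], simp)
  then have I: "(f has_integral integral (cbox a b) f) (cbox a b)" by blast
  have "(f has_integral integral (cbox a b) f) UNIV"
    by (rule has_integral_on_superset[OF I]) (use z in auto)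
  then have e1: "integral UNIV f = integral (cbox a b) f" by blast
  have I2: "((f \<circ> (+) c) has_integral integral (cbox a b) f) (cbox (a - c) (b - c))"
    using has_integral_shift_cbox_iff[of f c _ "a - c" "b - c"] I by simp
  have z2: "x \<notin> cbox (a - c) (b - c) \<Longrightarrow> (f \<circ> (+) c) x = 0" for x
  proof -
    assume "x \<notin> cbox (a - c) (b - c)"
    then have "c + x \<notin> cbox a b"
      by (auto simp: mem_box inner_add_left inner_diff_left algebra_simps)
    then show ?thesis using z by simp
  qed
  have "((f \<circ> (+) c) has_integral integral (cbox a b) f) UNIV"
    by (rule has_integral_on_superset[OF I2]) (use z2 in auto)
  then have "integral UNIV (\<lambda>x. f (x + c)) = integral (cbox a b) f"
    by (simp add: o_def add.commute integral_unique)
  with e1 show ?thesis by simp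
qed

lemma partial_zero_outside:
  assumes "C1 \<phi>" "\<And>x. R < norm x \<Longrightarrow> \<phi> x = 0" "R < norm x"
  shows "partial i \<phi> x = 0"
proof -
  have "((\<lambda>x. 0::real) has_derivative (\<lambda>h. 0)) (at x)" by simp
  then have "(\<phi> has_derivative (\<lambda>h. 0)) (at x)"
  proof (rule has_derivative_transform_within_open[of _ _ _ _ "{y. R < norm y}"])
    show "open {y::real^'n. R < norm y}" by (intro open_Collect_less continuous_intros)
  qed (use assms in auto)
  then show ?thesis using partial_eq by auto
qed

lemma unif_cont_supp:
  fixes D :: "real^'n::finite \<Rightarrow> real"
  assumes "continuous_on UNIV D" "\<And>x. R < norm x \<Longrightarrow> D x = 0" "e > 0"
  obtains d where "d > 0" "d \<le> 1" "\<And>x y. dist x y < d \<Longrightarrow> \<bar>D x - D y\<bar> < e"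
proof -
  have "uniformly_continuous_on (cball 0 (R+1)) D"
    by (rule compact_uniformly_continuous) (auto intro: continuous_on_subset[OF assms(1)])
  then obtain d where d: "d > 0" "\<And>x y. x \<in> cball 0 (R+1) \<Longrightarrow> y \<in> cball 0 (R+1) \<Longrightarrow> dist y x < d \<Longrightarrow> dist (D y) (D x) < e"
    unfolding uniformly_continuous_on_def using assms(3) by metis
  show ?thesis
  proof (rule that[of "min d 1"])
    fix x y :: "real^'n" assume xy: "dist x y < min d 1"
    show "\<bar>D x - D y\<bar> < e"
    proof (cases "norm x \<le> R + 1 \<and> norm y \<le> R + 1")
      case True then show ?thesis using d(2)[of y x] xy by (auto simp: dist_real_def dist_commute)
    next
      case False
      have "norm x \<le> norm y + dist x y" "norm y \<le> norm x + dist x y"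
        by (metis dist_norm norm_triangle_sub dist_commute add.commute)+
      with False xy have "R < norm x" "R < norm y" by auto
      then show ?thesis using assms(2) assms(3) by simp
    qed
  qed (use d in auto)
qed

lemma line_deriv:
  fixes x :: "real^'n::finite"
  assumes "C1 \<phi>"
  shows "((\<lambda>s. \<phi> (x + s *\<^sub>R axis i 1)) has_real_derivative partial i \<phi> (x + s *\<^sub>R axis i 1)) (at s)"
proof -
  let ?e = "axis i (1::real) :: real^'n"
  have L: "((\<lambda>s. x + s *\<^sub>R ?e) has_derivative (\<lambda>h. h *\<^sub>R ?e)) (at s)"
    by (auto intro!: derivative_eq_intros)
  have F: "(\<phi> has_derivative frechet_derivative \<phi> (at (x + s *\<^sub>R ?e))) (at (x + s *\<^sub>R ?e))"
    using has_derivative_frechet[OF C1_diff[OF assms]] .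
  have lin: "linear (frechet_derivative \<phi> (at (x + s *\<^sub>R ?e)))"
    using has_derivative_linear[OF F] .
  have "((\<lambda>s. \<phi> (x + s *\<^sub>R ?e)) has_derivative (\<lambda>h. frechet_derivative \<phi> (at (x + s *\<^sub>R ?e)) (h *\<^sub>R ?e))) (at s)"
    using has_derivative_compose[OF L F] by (simp add: o_def)
  moreover have "(\<lambda>h. frechet_derivative \<phi> (at (x + s *\<^sub>R ?e)) (h *\<^sub>R ?e)) = (\<lambda>h. h * partial i \<phi> (x + s *\<^sub>R ?e))"
    using linear_scale[OF lin] by (auto simp: partial_def)
  moreover have "(\<lambda>h. h * partial i \<phi> (x + s *\<^sub>R ?e)) = (*) (partial i \<phi> (x + s *\<^sub>R ?e))"
    by (rule ext) (simp add: mult.commute)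
  ultimately show ?thesis by (simp add: has_field_derivative_def)
qed

lemma int_partial_zero:
  fixes \<phi> :: "real^'n::finite \<Rightarrow> real"
  assumes C: "C1 \<phi>" and S: "\<And>x. R < norm x \<Longrightarrow> \<phi> x = 0"
  shows "integral UNIV (partial i \<phi>) = 0"
proof -
  define D where "D = partial i \<phi>"
  define e where "e = (axis i (1::real) :: real^'n)"
  have ne: "norm e = 1" by (simp add: e_def)
  have Dc: "continuous_on UNIV D" using C1_partial_cont[OF C] by (simp add: D_def)
  have DS: "R < norm x \<Longrightarrow> D x = 0" for x using partial_zero_outside[OF C S] by (simp add: D_def)
  have \<phi>c: "continuous_on UNIV \<phi>" using C1_cont[OF C] .
  obtain a b :: "real^'n" where ab: "cball 0 (R+1) \<subseteq> cbox a b" by (rule cbox_big)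
  define B where "B = cbox a b"
  have DI: "D integrable_on UNIV" by (rule supp_integrable[OF Dc DS])
  have \<phi>I: "\<phi> integrable_on UNIV" by (rule supp_integrable[OF \<phi>c S])
  have bound: "\<bar>integral UNIV D\<bar> \<le> \<epsilon> * Henstock_Kurzweil_Integration.content B" if \<epsilon>: "\<epsilon> > 0" for \<epsilon>
  proof -
    obtain d where d: "d > 0" "d \<le> 1" "\<And>x y. dist x y < d \<Longrightarrow> \<bar>D x - D y\<bar> < \<epsilon>"
      using unif_cont_supp[OF Dc DS \<epsilon>] by blast
    define t where "t = d / 2"
    have t: "0 < t" "t < d" "t \<le> 1" using d by (auto simp: t_def)
    define Q where "Q x = (\<phi> (x + t *\<^sub>R e) - \<phi> x) / t" for x
    have ptw: "\<bar>D x - Q x\<bar> \<le> (if x \<in> B then \<epsilon> else 0)" for x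
    proof -
      obtain z where z: "0 < z" "z < t" "\<phi> (x + t *\<^sub>R e) - \<phi> (x + 0 *\<^sub>R e) = (t - 0) * D (x + z *\<^sub>R e)"
        using MVT2[of 0 t "\<lambda>s. \<phi> (x + s *\<^sub>R e)" "\<lambda>s. D (x + s *\<^sub>R e)"] line_deriv[OF C] t
        unfolding D_def e_def by blast
      have Qx: "Q x = D (x + z *\<^sub>R e)" using z t by (simp add: Q_def)
      have "dist x (x + z *\<^sub>R e) < d" using z t ne by (simp add: dist_norm)
      then have l: "\<bar>D x - Q x\<bar> < \<epsilon>" using d(3) Qx by simp
      show ?thesis
      proof (cases "x \<in> B")
        case True then show ?thesis using l by simp
      next
        case False
        then have nx: "R + 1 < norm x" using ab unfolding B_def by (meson mem_cball_0 not_le subsetD)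
        have "norm x \<le> norm (x + t *\<^sub>R e) + t" using norm_triangle_sub[of x "x + t *\<^sub>R e"] ne t
          by (simp add: norm_minus_commute)
        then have "R < norm (x + t *\<^sub>R e)" using nx t by simp
        then show ?thesis using False S[of x] S[of "x + t *\<^sub>R e"] DS[of x] nx by (simp add: Q_def)
      qed
    qed
    have sh: "(\<lambda>x. \<phi> (x + t *\<^sub>R e)) integrable_on UNIV"
    proof (rule supp_integrable[of _ "R + 1"])
      show "continuous_on UNIV (\<lambda>x. \<phi> (x + t *\<^sub>R e))"
        by (rule continuous_on_compose2[OF \<phi>c]) (auto intro: continuous_intros)
      fix x :: "real^'n" assume "R + 1 < norm x"
      moreover have "norm x \<le> norm (x + t *\<^sub>R e) + t" using norm_triangle_sub[of x "x + t *\<^sub>R e"] ne t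
          by (simp add: norm_minus_commute)
      ultimately show "\<phi> (x + t *\<^sub>R e) = 0" using S t by simp
    qed
    have QI: "Q integrable_on UNIV"
    proof -
      have "(\<lambda>x. (1/t) *\<^sub>R (\<phi> (x + t *\<^sub>R e) - \<phi> x)) integrable_on UNIV"
        by (intro integrable_cmul integrable_diff sh \<phi>I)
      then show ?thesis by (simp add: Q_def[abs_def] divide_inverse mult.commute)
    qed
    have Q0: "integral UNIV Q = 0"
    proof -
      have "Q = (\<lambda>x. (1/t) *\<^sub>R (\<phi> (x + t *\<^sub>R e) - \<phi> x))"
        by (simp add: Q_def[abs_def] divide_inverse mult.commute)
      then have "integral UNIV Q = (1/t) *\<^sub>R (integral UNIV (\<lambda>x. \<phi> (x + t *\<^sub>R e)) - integral UNIV \<phi>)"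
        by (simp add: integral_diff[OF sh \<phi>I])
      also have "integral UNIV (\<lambda>x. \<phi> (x + t *\<^sub>R e)) = integral UNIV \<phi>"
        by (rule supp_translate[OF \<phi>c S])
      finally show ?thesis by simp
    qed
    have gI: "(\<lambda>x. if x \<in> B then \<epsilon> else 0) integrable_on UNIV"
      using integrable_restrict_UNIV[of B "\<lambda>x. \<epsilon>"] unfolding B_def by (simp add: integrable_const)
    have "\<bar>integral UNIV D\<bar> = \<bar>integral UNIV (\<lambda>x. D x - Q x)\<bar>"
      using integral_diff[OF DI QI] Q0 by simp
    also have "\<dots> \<le> integral UNIV (\<lambda>x. if x \<in> B then \<epsilon> else 0)"
      using integral_norm_bound_integral[OF integrable_diff[OF DI QI] gI] ptw by simp
    also have "\<dots> = \<epsilon> * Henstock_Kurzweil_Integration.content B"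
      using integral_restrict_UNIV[of B "\<lambda>x. \<epsilon>"] unfolding B_def by simp
    finally show ?thesis .
  qed
  show ?thesis
  proof (rule ccontr)
    assume nz: "integral UNIV (partial i \<phi>) \<noteq> 0"
    define c where "c = Henstock_Kurzweil_Integration.content B"
    have c0: "c \<ge> 0" by (simp add: c_def B_def)
    have p: "0 < \<bar>integral UNIV D\<bar> / (c + 1)" using nz c0 by (simp add: D_def)
    have "\<bar>integral UNIV D\<bar> \<le> (\<bar>integral UNIV D\<bar> / (c + 1)) * c"
      using bound[OF p] by (simp add: c_def)
    also have "\<dots> < \<bar>integral UNIV D\<bar>"
      using nz c0 by (simp add: D_def field_simps)
    finally show False by simp
  qed
qed

lemma ibp:
  fixes \<psi> V :: "real^'n::finite \<Rightarrow> real"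
  assumes "C1 \<psi>" "\<And>x. R < norm x \<Longrightarrow> \<psi> x = 0" "C1 V"
  shows "integral UNIV (\<lambda>x. partial i \<psi> x * V x + \<psi> x * partial i V x) = 0"
proof -
  have "integral UNIV (partial i (\<lambda>x. \<psi> x * V x)) = 0"
    by (rule int_partial_zero[of _ R]) (use assms C1_mult in auto)
  moreover have "partial i (\<lambda>x. \<psi> x * V x) = (\<lambda>x. partial i \<psi> x * V x + \<psi> x * partial i V x)"
    using C1_mult(2)[OF assms(1,3)] by auto
  ultimately show ?thesis by simp
qed

definition clampc :: "real \<Rightarrow> real" where "clampc t = max (-1) (min 0 t)"
definition hcut :: "real \<Rightarrow> real" where "hcut t = (clampc t)\<^sup>2 * (2 * clampc t + 3)"
definition hder :: "real \<Rightarrow> real" where "hder t = 6 * clampc t * (clampc t + 1)"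

lemma deriv_split:
  assumes "(f has_field_derivative D) (at x within {..x})" "(f has_field_derivative D) (at x within {x..})"
  shows "(f has_field_derivative D) (at (x::real))"
proof -
  have "{..x} \<union> {x..} = UNIV" by auto
  then show ?thesis using assms unfolding has_field_derivative_iff
    by (metis Lim_within_Un)
qed

lemma g_deriv: "((\<lambda>s::real. s\<^sup>2 * (2 * s + 3)) has_field_derivative 6 * t * (t + 1)) (at t within S)"
  by (auto intro!: derivative_eq_intros simp: algebra_simps power2_eq_square)

lemma hcut_deriv: "(hcut has_real_derivative hder t) (at t)"
proof -
  let ?g = "\<lambda>s::real. s\<^sup>2 * (2 * s + 3)"
  consider "t < -1" | "t = -1" | "-1 < t \<and> t < 0" | "t = 0" | "0 < t" by linarith
  then show ?thesis
  proof cases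
    case 1
    show ?thesis
      by (rule has_field_derivative_transform_within_open[of "\<lambda>_. 1" _ _ "{..<-1}"])
         (use 1 in \<open>auto simp: hder_def hcut_def clampc_def\<close>)
  next
    case 5
    show ?thesis
      by (rule has_field_derivative_transform_within_open[of "\<lambda>_. 0" _ _ "{0<..}"])
         (use 5 in \<open>auto simp: hder_def hcut_def clampc_def\<close>)
  next
    case 3
    have e: "hder t = 6 * t * (t + 1)" using 3 by (simp add: hder_def clampc_def)
    show ?thesis unfolding e
      by (rule has_field_derivative_transform_within_open[OF g_deriv[of t UNIV], of "{-1<..<0}"])
         (use 3 in \<open>auto simp: hcut_def clampc_def\<close>)
  next
    case 2
    show ?thesis
    proof (rule deriv_split)
      show "(hcut has_real_derivative hder t) (at t within {..t})"
        by (rule has_field_derivative_transform_within[of "\<lambda>_. 1" _ _ _ 1])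
           (use 2 in \<open>auto simp: hder_def hcut_def clampc_def\<close>)
      have e: "hder t = 6 * t * (t + 1)" using 2 by (simp add: hder_def clampc_def)
      show "(hcut has_real_derivative hder t) (at t within {t..})" unfolding e
      proof (rule has_field_derivative_transform_within[OF g_deriv[of t "{t..}"], of 1])
        show "?g x = hcut x" if "x \<in> {t..}" "dist x t < 1" for x
          using that 2 by (auto simp: hcut_def clampc_def dist_real_def)
      qed (use 2 in \<open>auto simp: hder_def clampc_def\<close>)
    qed
  next
    case 4
    show ?thesis
    proof (rule deriv_split)
      show "(hcut has_real_derivative hder t) (at t within {t..})"
        by (rule has_field_derivative_transform_within[of "\<lambda>_. 0" _ _ _ 1])
           (use 4 in \<open>auto simp: hder_def hcut_def clampc_def\<close>)
      have e: "hder t = 6 * t * (t + 1)" using 4 by (simp add: hder_def clampc_def)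
      show "(hcut has_real_derivative hder t) (at t within {..t})" unfolding e
      proof (rule has_field_derivative_transform_within[OF g_deriv[of t "{..t}"], of 1])
        show "?g x = hcut x" if "x \<in> {..t}" "dist x t < 1" for x
          using that 4 by (auto simp: hcut_def clampc_def dist_real_def)
      qed (use 4 in \<open>auto simp: hder_def clampc_def\<close>)
    qed
  qed
qed

lemma hder_cont: "continuous_on UNIV hder"
  unfolding hder_def clampc_def by (intro continuous_intros)

lemma hcut_one: "t \<le> -1 \<Longrightarrow> hcut t = 1" and hcut_zero: "0 \<le> t \<Longrightarrow> hcut t = 0"
  by (auto simp: hcut_def clampc_def)

lemma hcut_range: "0 \<le> hcut t" "hcut t \<le> 1"
proof -
  have c: "-1 \<le> clampc t" "clampc t \<le> 0" by (auto simp: clampc_def)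
  have "hcut t = (clampc t)\<^sup>2 * (2 * clampc t + 3)" by (simp add: hcut_def)
  show "0 \<le> hcut t" using c unfolding hcut_def by (intro mult_nonneg_nonneg) auto
  have "1 - hcut t = (clampc t + 1)\<^sup>2 * (1 - 2 * clampc t)"
    by (simp add: hcut_def algebra_simps power2_eq_square)
  moreover have "0 \<le> (clampc t + 1)\<^sup>2 * (1 - 2 * clampc t)" using c by (intro mult_nonneg_nonneg) auto
  ultimately show "hcut t \<le> 1" by linarith
qed

lemma hder_nonpos: "hder t \<le> 0"
proof -
  have c: "-1 \<le> clampc t" "clampc t \<le> 0" by (auto simp: clampc_def)
  then have "0 \<le> (- clampc t) * (clampc t + 1)" by (intro mult_nonneg_nonneg) auto
  then show ?thesis by (simp add: hder_def algebra_simps)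
qed

lemma hder_supp: "hder t \<noteq> 0 \<Longrightarrow> -1 < t \<and> t < 0"
  by (auto simp: hder_def clampc_def split: if_splits)

lemma C1_sub:
  fixes w v :: "real^'n::finite \<Rightarrow> real"
  assumes "C1 w" "C1 v"
  shows "C1 (\<lambda>x. w x - v x)"
    and "partial j (\<lambda>x. w x - v x) x = partial j w x - partial j v x"
proof -
  have m: "C1 (\<lambda>x. (-1::real) * v x)" "partial j (\<lambda>x. (-1::real) * v x) x = - partial j v x"
  proof -
    have c1: "C1 (\<lambda>x::real^'n. -1::real)" by (rule C1_const)
    show "C1 (\<lambda>x. (-1::real) * v x)" by (rule C1_mult(1)[OF c1 assms(2)])
    show "partial j (\<lambda>x. (-1::real) * v x) x = - partial j v x"
    proof -
      have "partial j (\<lambda>x::real^'n. -1::real) x = 0" by (rule partial_const)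
      then show ?thesis using C1_mult(2)[OF c1 assms(2), of j x] by simp
    qed
  qed
  have e: "(\<lambda>x. w x - v x) = (\<lambda>x. w x + (-1) * v x)" by auto
  show "C1 (\<lambda>x. w x - v x)" unfolding e by (rule C1_add(1)[OF assms(1) m(1)])
  show "partial j (\<lambda>x. w x - v x) x = partial j w x - partial j v x"
    unfolding e C1_add(2)[OF assms(1) m(1)] m(2) by simp
qed

lemma neumann_C1: "neumann_fun \<Omega> \<rho> w \<Longrightarrow> C1 w"
  by (metis Ck_Suc_C1 neumann_fun_def numeral_2_eq_2)

lemma neumann_C1p: "neumann_fun \<Omega> \<rho> w \<Longrightarrow> C1 (partial j w)"
  unfolding neumann_fun_def by (rule Ck2_C1_partial) simp

lemma smooth_C1: "smooth_fun \<rho> \<Longrightarrow> C1 \<rho>" "smooth_fun \<rho> \<Longrightarrow> C1 (partial j \<rho>)"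
  unfolding smooth_fun_def by (meson Ck_Suc_C1 Ck2_C1_partial)+

lemma neumann_sum:
  fixes q :: "real^'n::finite \<Rightarrow> real"
  assumes "neumann_fun \<Omega> \<rho> q" "x \<in> frontier \<Omega>" "grad \<rho> x \<noteq> 0"
  shows "(\<Sum>j\<in>UNIV. partial j \<rho> x * partial j q x) = 0"
proof -
  define F where "F = frechet_derivative q (at x)"
  have lin: "linear F" unfolding F_def
    using has_derivative_linear[OF has_derivative_frechet[OF C1_diff[OF neumann_C1[OF assms(1)]]]] .
  have "F (outer_normal \<rho> x) = 0" using assms(1,2) unfolding neumann_fun_def F_def by auto
  then have "(1 / norm (grad \<rho> x)) * F (grad \<rho> x) = 0"
    unfolding outer_normal_def using linear_scale[OF lin] by (simp add: divide_inverse)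
  then have z: "F (grad \<rho> x) = 0" using assms(3) by simp
  have "grad \<rho> x = (\<Sum>j\<in>UNIV. (grad \<rho> x $ j) *\<^sub>R axis j 1)"
    using basis_expansion[of "grad \<rho> x"] by (simp add: scalar_mult_eq_scaleR)
  then have "F (grad \<rho> x) = F (\<Sum>j\<in>UNIV. (grad \<rho> x $ j) *\<^sub>R axis j 1)" by simp
  also have "\<dots> = (\<Sum>j\<in>UNIV. F ((grad \<rho> x $ j) *\<^sub>R axis j 1))" by (rule linear_sum[OF lin])
  also have "\<dots> = (\<Sum>j\<in>UNIV. (grad \<rho> x $ j) * F (axis j 1))" by (simp add: linear_scale[OF lin])
  finally have "F (grad \<rho> x) = (\<Sum>j\<in>UNIV. (grad \<rho> x $ j) * F (axis j 1))" .
  with z show ?thesis by (simp add: grad_def partial_def F_def)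
qed

lemma supp_integrable2:
  fixes f :: "real^'n::finite \<Rightarrow> real"
  assumes "continuous_on UNIV f" "\<And>x. x \<notin> \<Omega> \<Longrightarrow> f x = 0" "\<Omega> \<subseteq> cball 0 R"
  shows "f integrable_on UNIV"
proof (rule supp_integrable[OF assms(1), of R])
  fix x :: "real^'n" assume "R < norm x"
  then have "x \<notin> \<Omega>" using assms(3) by (auto simp: subset_iff)
  then show "f x = 0" by (rule assms(2))
qed

lemma cutoff_facts:
  fixes \<rho> :: "real^'n::finite \<Rightarrow> real"
  assumes "C1 \<rho>" "\<epsilon> > 0"
  shows "C1 (\<lambda>x. hcut (\<rho> x * inverse \<epsilon>))"
    and "partial j (\<lambda>x. hcut (\<rho> x * inverse \<epsilon>)) x = hder (\<rho> x * inverse \<epsilon>) * inverse \<epsilon> * partial j \<rho> x"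
proof -
  have c1: "C1 (\<lambda>x::real^'n. inverse \<epsilon>)" by (rule C1_const)
  have w: "C1 (\<lambda>x. \<rho> x * inverse \<epsilon>)" by (rule C1_mult(1)[OF assms(1) c1])
  have pw: "partial j (\<lambda>x. \<rho> x * inverse \<epsilon>) x = partial j \<rho> x * inverse \<epsilon>" for j x
    using C1_mult(2)[OF assms(1) c1, of j x] partial_const[of j "inverse \<epsilon>" x] by simp
  show "C1 (\<lambda>x. hcut (\<rho> x * inverse \<epsilon>))" by (rule C1_comp(1)[OF w hcut_deriv hder_cont])
  show "partial j (\<lambda>x. hcut (\<rho> x * inverse \<epsilon>)) x = hder (\<rho> x * inverse \<epsilon>) * inverse \<epsilon> * partial j \<rho> x"
    using C1_comp(2)[OF w hcut_deriv hder_cont, of j x] pw by simp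
qed

lemma imag_zero:
  fixes p q \<rho> :: "real^'n::finite \<Rightarrow> real"
  assumes dom: "smooth_domain \<Omega> \<rho>"
    and np: "neumann_fun \<Omega> \<rho> p" and nq: "neumann_fun \<Omega> \<rho> q"
    and lp: "\<And>x. x \<in> \<Omega> \<Longrightarrow> laplacian p x = a * p x - b * q x"
    and lq: "\<And>x. x \<in> \<Omega> \<Longrightarrow> laplacian q x = b * p x + a * q x"
    and nz: "\<exists>x\<in>\<Omega>. p x \<noteq> 0 \<or> q x \<noteq> 0"
  shows "b = 0"
proof -
  have sm: "smooth_fun \<rho>" and \<Omega>eq: "\<Omega> = {x. \<rho> x < 0}" and bdd: "bounded \<Omega>"
    and gr: "\<And>x. \<rho> x = 0 \<Longrightarrow> grad \<rho> x \<noteq> 0"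
    using dom unfolding smooth_domain_def by auto
  have C\<rho>: "C1 \<rho>" and C\<rho>j: "\<And>j. C1 (partial j \<rho>)" using smooth_C1[OF sm] by auto
  have Cp: "C1 p" "\<And>j. C1 (partial j p)" using neumann_C1[OF np] neumann_C1p[OF np] by auto
  have Cq: "C1 q" "\<And>j. C1 (partial j q)" using neumann_C1[OF nq] neumann_C1p[OF nq] by auto
  have \<rho>c: "continuous_on UNIV \<rho>" using C1_cont[OF C\<rho>] .
  have op: "open \<Omega>" unfolding \<Omega>eq by (rule open_Collect_less) (auto intro: \<rho>c continuous_intros)
  obtain R where "R > 0" "\<forall>x\<in>\<Omega>. norm x \<le> R" using bdd bounded_pos by blast
  then have R: "\<Omega> \<subseteq> cball 0 R" by auto
  have int2: "\<And>f :: real^'n \<Rightarrow> real. continuous_on UNIV f \<Longrightarrow> (\<And>x. x \<notin> \<Omega> \<Longrightarrow> f x = 0) \<Longrightarrow> f integrable_on UNIV"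
  proof -
    fix f :: "real^'n \<Rightarrow> real"
    assume "continuous_on UNIV f" "\<And>x. x \<notin> \<Omega> \<Longrightarrow> f x = 0"
    then show "f integrable_on UNIV" by (rule supp_integrable2[OF _ _ R])
  qed
  have nO: "x \<notin> \<Omega> \<Longrightarrow> 0 \<le> \<rho> x" for x using \<Omega>eq by auto
  define P where "P x = p x * p x + q x * q x" for x
  define N where "N x = (\<Sum>j\<in>UNIV. partial j \<rho> x * partial j \<rho> x)" for x
  define Fj where "Fj j x = p x * partial j q x - q x * partial j p x" for j x
  define G where "G x = (\<Sum>j\<in>UNIV. partial j \<rho> x * Fj j x)" for x
  define L where "L x = laplacian \<rho> x" for x
  have CF: "C1 (Fj j)" for j
    unfolding Fj_def[abs_def] by (intro C1_sub(1) C1_mult(1) Cp Cq)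
  have pF: "partial j (Fj j) x = p x * partial j (partial j q) x - q x * partial j (partial j p) x" for j x
  proof -
    have "partial j (Fj j) x = (partial j p x * partial j q x + p x * partial j (partial j q) x)
        - (partial j q x * partial j p x + q x * partial j (partial j p) x)"
      unfolding Fj_def[abs_def]
      by (simp add: C1_sub(2)[OF C1_mult(1)[OF Cp(1) Cq(2)] C1_mult(1)[OF Cq(1) Cp(2)]]
            C1_mult(2)[OF Cp(1) Cq(2)] C1_mult(2)[OF Cq(1) Cp(2)])
    then show ?thesis by (simp add: algebra_simps)
  qed
  have Pc: "continuous_on UNIV P" unfolding P_def[abs_def]
    using C1_cont[OF Cp(1)] C1_cont[OF Cq(1)] by (intro continuous_intros) auto
  have Nc: "continuous_on UNIV N" unfolding N_def[abs_def]
    using C1_cont[OF C\<rho>j] by (intro continuous_intros) auto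
  have Fc: "continuous_on UNIV (Fj j)" for j using C1_cont[OF CF] .
  have Gc: "continuous_on UNIV G" unfolding G_def[abs_def]
    using C1_cont[OF C\<rho>j] Fc by (intro continuous_intros) auto
  have Lc: "continuous_on UNIV L" unfolding L_def[abs_def] laplacian_def
    using C1_partial_cont[OF C\<rho>j] by (intro continuous_intros) auto
  have ident: "integral UNIV (\<lambda>x. hder (\<rho> x * inverse \<epsilon>) * inverse \<epsilon> * G x + b * (hcut (\<rho> x * inverse \<epsilon>) * P x)) = 0
     \<and> integral UNIV (\<lambda>x. hder (\<rho> x * inverse \<epsilon>) * inverse \<epsilon> * N x + hcut (\<rho> x * inverse \<epsilon>) * L x) = 0"
    if \<epsilon>: "\<epsilon> > 0" for \<epsilon>
  proof -
    define \<psi> where "\<psi> x = hcut (\<rho> x * inverse \<epsilon>)" for x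
    have C\<psi>: "C1 \<psi>" unfolding \<psi>_def[abs_def] by (rule cutoff_facts(1)[OF C\<rho> \<epsilon>])
    have p\<psi>: "partial j \<psi> x = hder (\<rho> x * inverse \<epsilon>) * inverse \<epsilon> * partial j \<rho> x" for j x
      unfolding \<psi>_def[abs_def] by (rule cutoff_facts(2)[OF C\<rho> \<epsilon>])
    have \<psi>0: "x \<notin> \<Omega> \<Longrightarrow> \<psi> x = 0" for x
      using nO[of x] \<epsilon> by (auto simp: \<psi>_def intro!: hcut_zero)
    have hd0: "x \<notin> \<Omega> \<Longrightarrow> hder (\<rho> x * inverse \<epsilon>) = 0" for x
    proof -
      assume "x \<notin> \<Omega>"
      then have "0 \<le> \<rho> x * inverse \<epsilon>" using nO[of x] \<epsilon> by simp
      then show ?thesis using hder_supp[of "\<rho> x * inverse \<epsilon>"] by linarith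
    qed
    have \<psi>R: "R < norm x \<Longrightarrow> \<psi> x = 0" for x by (meson R \<psi>0 mem_cball_0 not_le subsetD)
    have hdc: "continuous_on UNIV (\<lambda>x. hder (\<rho> x * inverse \<epsilon>))"
      by (rule continuous_on_compose2[OF hder_cont]) (auto intro: \<rho>c continuous_intros)
    have \<psi>c: "continuous_on UNIV \<psi>" using C1_cont[OF C\<psi>] .
    have p\<psi>c: "continuous_on UNIV (partial j \<psi>)" for j using C1_partial_cont[OF C\<psi>] .
    have I1: "integral UNIV (\<lambda>x. \<Sum>j\<in>UNIV. partial j \<psi> x * Fj j x + \<psi> x * partial j (Fj j) x) = 0"
    proof -
      have "integral UNIV (\<lambda>x. \<Sum>j\<in>UNIV. partial j \<psi> x * Fj j x + \<psi> x * partial j (Fj j) x)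
          = (\<Sum>j\<in>UNIV. integral UNIV (\<lambda>x. partial j \<psi> x * Fj j x + \<psi> x * partial j (Fj j) x))"
      proof (rule integral_sum)
        fix j show "(\<lambda>x. partial j \<psi> x * Fj j x + \<psi> x * partial j (Fj j) x) integrable_on UNIV"
        proof (rule int2)
          show "continuous_on UNIV (\<lambda>x. partial j \<psi> x * Fj j x + \<psi> x * partial j (Fj j) x)"
            using p\<psi>c Fc \<psi>c C1_partial_cont[OF CF] by (intro continuous_intros) auto
        qed (auto simp: p\<psi> \<psi>0 hd0)
      qed simp
      also have "\<dots> = 0" using ibp[OF C\<psi> \<psi>R CF] by simp
      finally show ?thesis .
    qed
    have pt1: "(\<Sum>j\<in>UNIV. partial j \<psi> x * Fj j x + \<psi> x * partial j (Fj j) x)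
        = hder (\<rho> x * inverse \<epsilon>) * inverse \<epsilon> * G x + b * (\<psi> x * P x)" for x
    proof -
      have a: "(\<Sum>j\<in>UNIV. partial j \<psi> x * Fj j x) = hder (\<rho> x * inverse \<epsilon>) * inverse \<epsilon> * G x"
        by (simp add: p\<psi> G_def sum_distrib_left mult_ac)
      have b: "(\<Sum>j\<in>UNIV. \<psi> x * partial j (Fj j) x) = \<psi> x * (p x * laplacian q x - q x * laplacian p x)"
        by (simp add: pF laplacian_def sum_distrib_left sum_subtractf algebra_simps)
      have c: "\<psi> x * (p x * laplacian q x - q x * laplacian p x) = b * (\<psi> x * P x)"
      proof (cases "x \<in> \<Omega>")
        case True then show ?thesis by (simp add: lp lq P_def algebra_simps)
      next
        case False then show ?thesis by (simp add: \<psi>0)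
      qed
      show ?thesis using a b c by (simp add: sum.distrib)
    qed
    have I2: "integral UNIV (\<lambda>x. \<Sum>j\<in>UNIV. partial j \<psi> x * partial j \<rho> x + \<psi> x * partial j (partial j \<rho>) x) = 0"
    proof -
      have "integral UNIV (\<lambda>x. \<Sum>j\<in>UNIV. partial j \<psi> x * partial j \<rho> x + \<psi> x * partial j (partial j \<rho>) x)
          = (\<Sum>j\<in>UNIV. integral UNIV (\<lambda>x. partial j \<psi> x * partial j \<rho> x + \<psi> x * partial j (partial j \<rho>) x))"
      proof (rule integral_sum)
        fix j show "(\<lambda>x. partial j \<psi> x * partial j \<rho> x + \<psi> x * partial j (partial j \<rho>) x) integrable_on UNIV"
        proof (rule int2)
          show "continuous_on UNIV (\<lambda>x. partial j \<psi> x * partial j \<rho> x + \<psi> x * partial j (partial j \<rho>) x)"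
            using p\<psi>c C1_cont[OF C\<rho>j] \<psi>c C1_partial_cont[OF C\<rho>j] by (intro continuous_intros) auto
        qed (auto simp: p\<psi> \<psi>0 hd0)
      qed simp
      also have "\<dots> = 0" using ibp[OF C\<psi> \<psi>R C\<rho>j] by simp
      finally show ?thesis .
    qed
    have pt2: "(\<Sum>j\<in>UNIV. partial j \<psi> x * partial j \<rho> x + \<psi> x * partial j (partial j \<rho>) x)
        = hder (\<rho> x * inverse \<epsilon>) * inverse \<epsilon> * N x + \<psi> x * L x" for x
      by (simp add: p\<psi> N_def L_def laplacian_def sum.distrib sum_distrib_left mult_ac)
    have J1: "integral UNIV (\<lambda>x. hder (\<rho> x * inverse \<epsilon>) * inverse \<epsilon> * G x + b * (\<psi> x * P x)) = 0"
      using I1 by (simp only: pt1)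
    have J2: "integral UNIV (\<lambda>x. hder (\<rho> x * inverse \<epsilon>) * inverse \<epsilon> * N x + \<psi> x * L x) = 0"
      using I2 by (simp only: pt2)
    show ?thesis using J1 J2 by (simp only: \<psi>_def)
  qed
  have hd0: "x \<notin> \<Omega> \<Longrightarrow> hder (\<rho> x * inverse \<epsilon>) = 0" if "\<epsilon> > 0" for x \<epsilon>
  proof -
    assume "x \<notin> \<Omega>"
    then have "0 \<le> \<rho> x * inverse \<epsilon>" using nO[of x] that by simp
    then show ?thesis using hder_supp[of "\<rho> x * inverse \<epsilon>"] by linarith
  qed
  have hc0: "x \<notin> \<Omega> \<Longrightarrow> hcut (\<rho> x * inverse \<epsilon>) = 0" if "\<epsilon> > 0" for x \<epsilon>
    using nO[of x] that by (auto intro!: hcut_zero)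
  have hdc: "continuous_on UNIV (\<lambda>x. hder (\<rho> x * inverse \<epsilon>))" for \<epsilon>
    by (rule continuous_on_compose2[OF hder_cont]) (auto intro: \<rho>c continuous_intros)
  have hcc: "continuous_on UNIV (\<lambda>x. hcut (\<rho> x * inverse \<epsilon>))" if "\<epsilon> > 0" for \<epsilon>
    using C1_cont[OF cutoff_facts(1)[OF C\<rho> that]] .
  define f1 where "f1 \<epsilon> x = hder (\<rho> x * inverse \<epsilon>) * inverse \<epsilon> * G x" for \<epsilon> x
  define f2 where "f2 \<epsilon> x = hcut (\<rho> x * inverse \<epsilon>) * P x" for \<epsilon> x
  define f3 where "f3 \<epsilon> x = hder (\<rho> x * inverse \<epsilon>) * inverse \<epsilon> * N x" for \<epsilon> x
  define f4 where "f4 \<epsilon> x = hcut (\<rho> x * inverse \<epsilon>) * L x" for \<epsilon> x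
  have f1I: "f1 \<epsilon> integrable_on UNIV" if "\<epsilon> > 0" for \<epsilon>
    by (rule int2) (use that hd0 hdc Gc in \<open>auto simp: f1_def[abs_def] intro!: continuous_intros\<close>)
  have f2I: "f2 \<epsilon> integrable_on UNIV" if "\<epsilon> > 0" for \<epsilon>
    by (rule int2) (use that hc0 hcc Pc in \<open>auto simp: f2_def[abs_def] intro!: continuous_intros\<close>)
  have f3I: "f3 \<epsilon> integrable_on UNIV" if "\<epsilon> > 0" for \<epsilon>
    by (rule int2) (use that hd0 hdc Nc in \<open>auto simp: f3_def[abs_def] intro!: continuous_intros\<close>)
  have f4I: "f4 \<epsilon> integrable_on UNIV" if "\<epsilon> > 0" for \<epsilon>
    by (rule int2) (use that hc0 hcc Lc in \<open>auto simp: f4_def[abs_def] intro!: continuous_intros\<close>)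
  have E1: "b * integral UNIV (f2 \<epsilon>) = - integral UNIV (f1 \<epsilon>)" if "\<epsilon> > 0" for \<epsilon>
  proof -
    have "integral UNIV (\<lambda>x. f1 \<epsilon> x + b * f2 \<epsilon> x) = 0"
      using ident[OF that] by (simp add: f1_def f2_def)
    moreover have "integral UNIV (\<lambda>x. f1 \<epsilon> x + b * f2 \<epsilon> x) = integral UNIV (f1 \<epsilon>) + b * integral UNIV (f2 \<epsilon>)"
      using integral_add[OF f1I[OF that] integrable_cmul[OF f2I[OF that], of b]] by simp
    ultimately show ?thesis by simp
  qed
  have E2: "integral UNIV (f3 \<epsilon>) = - integral UNIV (f4 \<epsilon>)" if "\<epsilon> > 0" for \<epsilon>
  proof -
    have "integral UNIV (\<lambda>x. f3 \<epsilon> x + f4 \<epsilon> x) = 0"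
      using ident[OF that] by (simp add: f3_def f4_def)
    moreover have "integral UNIV (\<lambda>x. f3 \<epsilon> x + f4 \<epsilon> x) = integral UNIV (f3 \<epsilon>) + integral UNIV (f4 \<epsilon>)"
      using integral_add[OF f3I[OF that] f4I[OF that]] by simp
    ultimately show ?thesis by simp
  qed
  obtain x0 where x0: "x0 \<in> \<Omega>" "p x0 \<noteq> 0 \<or> q x0 \<noteq> 0" using nz by blast
  have Px0: "0 < P x0" using x0(2) by (simp add: P_def sum_squares_gt_zero_iff)
  have \<rho>x0: "\<rho> x0 < 0" using x0(1) \<Omega>eq by auto
  define U where "U = {y. P x0 / 2 < P y} \<inter> {y. \<rho> y < \<rho> x0 / 2}"
  have "open U" unfolding U_def
    by (intro open_Int open_Collect_less) (auto intro: Pc \<rho>c continuous_intros)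
  moreover have "x0 \<in> U" using Px0 \<rho>x0 by (simp add: U_def)
  ultimately obtain a0 b0 where ab0: "cbox a0 b0 \<subseteq> U" "\<forall>i\<in>Basis. a0 \<bullet> i < b0 \<bullet> i"
    using open_contains_cbox by metis
  define m where "m = Henstock_Kurzweil_Integration.content (cbox a0 b0) * (P x0 / 2)"
  have m0: "m > 0" unfolding m_def using content_pos_lt[OF ab0(2)] Px0 by simp
  define \<epsilon>0 where "\<epsilon>0 = - \<rho> x0 / 2"
  have \<epsilon>00: "\<epsilon>0 > 0" using \<rho>x0 by (simp add: \<epsilon>0_def)
  have lower: "m \<le> integral UNIV (f2 \<epsilon>)" if "0 < \<epsilon>" "\<epsilon> \<le> \<epsilon>0" for \<epsilon>
  proof -
    have on: "P x0 / 2 \<le> f2 \<epsilon> y" if y: "y \<in> cbox a0 b0" for y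
    proof -
      have yU: "P x0 / 2 < P y" "\<rho> y < \<rho> x0 / 2" using ab0(1) y by (auto simp: U_def)
      have "\<rho> y < - \<epsilon>" using yU(2) \<open>\<epsilon> \<le> \<epsilon>0\<close> by (simp add: \<epsilon>0_def)
      then have "\<rho> y * inverse \<epsilon> \<le> -1" using \<open>0 < \<epsilon>\<close> by (simp add: field_simps)
      then have "hcut (\<rho> y * inverse \<epsilon>) = 1" by (rule hcut_one)
      then show ?thesis using yU(1) by (simp add: f2_def)
    qed
    have nn: "0 \<le> f2 \<epsilon> y" for y
      unfolding f2_def P_def by (intro mult_nonneg_nonneg hcut_range) simp
    have "m = integral (cbox a0 b0) (\<lambda>y. P x0 / 2)" by (simp add: m_def)
    also have "\<dots> \<le> integral (cbox a0 b0) (f2 \<epsilon>)"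
    proof (rule integral_le)
      show "(\<lambda>y. P x0 / 2) integrable_on cbox a0 b0" by (rule integrable_const)
      show "f2 \<epsilon> integrable_on cbox a0 b0" by (rule integrable_on_subcbox[OF f2I[OF that(1)]]) simp
      show "\<And>x. x \<in> cbox a0 b0 \<Longrightarrow> P x0 / 2 \<le> f2 \<epsilon> x" by (rule on)
    qed
    also have "\<dots> \<le> integral UNIV (f2 \<epsilon>)"
      by (rule integral_subset_le) (auto intro: nn integrable_on_subcbox[OF f2I[OF that(1)]] f2I[OF that(1)])
    finally show ?thesis .
  qed
  have "continuous_on (cball 0 R) (\<lambda>x. \<bar>L x\<bar>)"
    by (intro continuous_intros continuous_on_subset[OF Lc]) simp
  then obtain xm where xm: "xm \<in> cball 0 R" "\<forall>y\<in>cball 0 R. \<bar>L y\<bar> \<le> \<bar>L xm\<bar>"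
    using continuous_attains_sup[of "cball 0 R" "\<lambda>x. \<bar>L x\<bar>"] \<open>R > 0\<close> by auto
  define M where "M = \<bar>L xm\<bar>"
  have M0: "0 \<le> M" by (simp add: M_def)
  obtain a1 b1 :: "real^'n" where ab: "cball 0 R \<subseteq> cbox a1 b1" by (rule cbox_big)
  define K where "K = M * Henstock_Kurzweil_Integration.content (cbox a1 b1)"
  have K0: "0 \<le> K" using M0 by (simp add: K_def)
  have upper: "integral UNIV (f4 \<epsilon>) \<le> K" if "0 < \<epsilon>" for \<epsilon>
  proof -
    have gI: "(\<lambda>x. if x \<in> cbox a1 b1 then M else 0) integrable_on UNIV"
      using integrable_restrict_UNIV[of "cbox a1 b1" "\<lambda>x. M"] by (simp add: integrable_const)
    have "integral UNIV (f4 \<epsilon>) \<le> integral UNIV (\<lambda>x. if x \<in> cbox a1 b1 then M else 0)"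
    proof (rule integral_le[OF f4I[OF that] gI])
      fix x :: "real^'n"
      show "f4 \<epsilon> x \<le> (if x \<in> cbox a1 b1 then M else 0)"
      proof (cases "x \<in> \<Omega>")
        case True
        then have xc: "x \<in> cball 0 R" "x \<in> cbox a1 b1" using R ab by auto
        have "f4 \<epsilon> x \<le> \<bar>hcut (\<rho> x * inverse \<epsilon>)\<bar> * \<bar>L x\<bar>"
          by (simp add: f4_def abs_mult[symmetric])
        also have "\<dots> \<le> 1 * M"
          using hcut_range[of "\<rho> x * inverse \<epsilon>"] xm(2) xc(1) M0
          by (intro mult_mono) (auto simp: M_def)
        finally show ?thesis using xc by simp
      next
        case False then show ?thesis using hc0[OF that False] M0 by (simp add: f4_def)
      qed
    qed
    also have "\<dots> = K"
      using integral_restrict_UNIV[of "cbox a1 b1" "\<lambda>x. M"] by (simp add: K_def)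
    finally show ?thesis .
  qed
  have clos: "closure \<Omega> \<subseteq> {x. \<rho> x \<le> 0}"
    by (rule closure_minimal) (auto simp: \<Omega>eq intro: closed_Collect_le \<rho>c continuous_intros)
  have Nnn: "0 \<le> N x" for x unfolding N_def by (intro sum_nonneg) simp
  have Gbd: "G x = 0 \<and> 0 < N x" if "x \<in> closure \<Omega>" "\<rho> x = 0" for x
  proof -
    have fr: "x \<in> frontier \<Omega>" using that interior_open[OF op] \<Omega>eq by (auto simp: frontier_def)
    have g: "grad \<rho> x \<noteq> 0" using gr that(2) .
    have sp: "(\<Sum>j\<in>UNIV. partial j \<rho> x * partial j p x) = 0" by (rule neumann_sum[OF np fr g])
    have sq: "(\<Sum>j\<in>UNIV. partial j \<rho> x * partial j q x) = 0" by (rule neumann_sum[OF nq fr g])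
    have "G x = p x * (\<Sum>j\<in>UNIV. partial j \<rho> x * partial j q x) - q x * (\<Sum>j\<in>UNIV. partial j \<rho> x * partial j p x)"
      by (simp add: G_def Fj_def sum_distrib_left sum_subtractf algebra_simps)
    then have G0: "G x = 0" using sp sq by simp
    obtain j where j: "partial j \<rho> x \<noteq> 0" using g by (auto simp: grad_def vec_eq_iff)
    have "0 < N x" unfolding N_def
      by (rule sum_pos2[of _ j]) (use j in \<open>auto simp: zero_less_mult_iff\<close>)
    with G0 show ?thesis by simp
  qed
  have small: "\<exists>\<epsilon>1>0. \<forall>x\<in>\<Omega>. - \<epsilon>1 < \<rho> x \<longrightarrow> \<bar>G x\<bar> < \<eta> * N x" if \<eta>: "\<eta> > 0" for \<eta>
  proof -
    define KK where "KK = closure \<Omega> \<inter> {x. \<eta> * N x \<le> \<bar>G x\<bar>}"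
    have "closed KK" unfolding KK_def
      by (intro closed_Int closed_closure closed_Collect_le) (auto intro: Nc Gc continuous_intros)
    moreover have "bounded KK" unfolding KK_def using bdd by (meson bounded_closure bounded_subset inf_le1)
    ultimately have cK: "compact KK" by (simp add: compact_eq_bounded_closed)
    show ?thesis
    proof (cases "KK = {}")
      case True
      show ?thesis
      proof (intro exI[of _ 1] conjI ballI impI)
        fix x assume "x \<in> \<Omega>"
        then have "x \<notin> KK \<Longrightarrow> \<bar>G x\<bar> < \<eta> * N x" by (auto simp: KK_def closure_subset[THEN subsetD])
        then show "\<bar>G x\<bar> < \<eta> * N x" using True by simp
      qed simp
    next
      case False
      obtain x1 where x1: "x1 \<in> KK" "\<forall>y\<in>KK. \<rho> y \<le> \<rho> x1"
        using continuous_attains_sup[OF cK False continuous_on_subset[OF \<rho>c]] by auto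
      have x1c: "x1 \<in> closure \<Omega>" "\<eta> * N x1 \<le> \<bar>G x1\<bar>" using x1(1) by (auto simp: KK_def)
      have "\<rho> x1 \<le> 0" using clos x1c(1) by auto
      moreover have "\<rho> x1 \<noteq> 0"
      proof
        assume "\<rho> x1 = 0"
        then have "G x1 = 0 \<and> 0 < N x1" using Gbd x1c(1) by blast
        then show False using x1c(2) \<eta> by (metis abs_zero mult_pos_pos not_le)
      qed
      ultimately have neg: "\<rho> x1 < 0" by simp
      show ?thesis
      proof (intro exI[of _ "- \<rho> x1"] conjI ballI impI)
        fix x assume x: "x \<in> \<Omega>" "- (- \<rho> x1) < \<rho> x"
        then have "x \<notin> KK" using x1(2) by force
        then show "\<bar>G x\<bar> < \<eta> * N x" using x(1) by (auto simp: KK_def closure_subset[THEN subsetD])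
      qed (use neg in simp)
    qed
  qed
  have main: "\<bar>b\<bar> * m \<le> \<eta> * K" if \<eta>: "\<eta> > 0" for \<eta>
  proof -
    obtain \<epsilon>1 where \<epsilon>1: "\<epsilon>1 > 0" "\<And>x. x \<in> \<Omega> \<Longrightarrow> - \<epsilon>1 < \<rho> x \<Longrightarrow> \<bar>G x\<bar> < \<eta> * N x"
      using small[OF \<eta>] by blast
    define \<epsilon> where "\<epsilon> = min \<epsilon>0 \<epsilon>1"
    have \<epsilon>: "\<epsilon> > 0" "\<epsilon> \<le> \<epsilon>0" "\<epsilon> \<le> \<epsilon>1" using \<epsilon>1 \<epsilon>00 by (auto simp: \<epsilon>_def)
    have ptw: "norm (f1 \<epsilon> x) \<le> \<eta> * (- f3 \<epsilon> x)" for x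
    proof (cases "hder (\<rho> x * inverse \<epsilon>) = 0")
      case True then show ?thesis by (simp add: f1_def f3_def)
    next
      case False
      then have r: "-1 < \<rho> x * inverse \<epsilon>" "\<rho> x * inverse \<epsilon> < 0" using hder_supp by auto
      have r2: "- \<epsilon> < \<rho> x" "\<rho> x < 0" using r \<epsilon>(1) by (auto simp: field_simps)
      then have xO: "x \<in> \<Omega>" by (simp add: \<Omega>eq)
      have Gx: "\<bar>G x\<bar> \<le> \<eta> * N x" using \<epsilon>1(2)[OF xO] r2(1) \<epsilon>(3) by force
      have hn: "0 \<le> - hder (\<rho> x * inverse \<epsilon>) * inverse \<epsilon>" using hder_nonpos \<epsilon>(1)
        by (simp add: mult_nonpos_nonneg)
      have "norm (f1 \<epsilon> x) = (- hder (\<rho> x * inverse \<epsilon>) * inverse \<epsilon>) * \<bar>G x\<bar>"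
        using hder_nonpos[of "\<rho> x * inverse \<epsilon>"] \<epsilon>(1) by (simp add: f1_def abs_mult abs_of_nonpos)
      also have "\<dots> \<le> (- hder (\<rho> x * inverse \<epsilon>) * inverse \<epsilon>) * (\<eta> * N x)"
        by (rule mult_left_mono[OF Gx hn])
      also have "\<dots> = \<eta> * (- f3 \<epsilon> x)" by (simp add: f3_def)
      finally show ?thesis .
    qed
    have "\<bar>b\<bar> * m \<le> \<bar>b\<bar> * integral UNIV (f2 \<epsilon>)"
      by (rule mult_left_mono[OF lower[OF \<epsilon>(1,2)]]) simp
    also have "\<dots> = \<bar>integral UNIV (f1 \<epsilon>)\<bar>"
    proof -
      have "0 \<le> integral UNIV (f2 \<epsilon>)" using lower[OF \<epsilon>(1,2)] m0 by simp
      then have "\<bar>b\<bar> * integral UNIV (f2 \<epsilon>) = \<bar>b * integral UNIV (f2 \<epsilon>)\<bar>" by (simp add: abs_mult)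
      then show ?thesis using E1[OF \<epsilon>(1)] by simp
    qed
    also have "\<dots> \<le> integral UNIV (\<lambda>x. \<eta> * (- f3 \<epsilon> x))"
      using integral_norm_bound_integral[OF f1I[OF \<epsilon>(1)] _ ptw] integrable_cmul[OF integrable_neg[OF f3I[OF \<epsilon>(1)]], of \<eta>]
      by simp
    also have "\<dots> = \<eta> * integral UNIV (f4 \<epsilon>)"
      using integral_mult[OF integrable_neg[OF f3I[OF \<epsilon>(1)]], of \<eta>] E2[OF \<epsilon>(1)] by simp
    also have "\<dots> \<le> \<eta> * K" by (rule mult_left_mono[OF upper[OF \<epsilon>(1)]]) (use \<eta> in simp)
    finally show ?thesis .
  qed
  show "b = 0"
  proof (rule ccontr)
    assume "b \<noteq> 0"
    then have bm: "0 < \<bar>b\<bar> * m" using m0 by simp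
    define \<eta> where "\<eta> = \<bar>b\<bar> * m / (2 * (K + 1))"
    have \<eta>0: "\<eta> > 0" using bm K0 by (simp add: \<eta>_def)
    have "\<eta> * K < \<bar>b\<bar> * m"
    proof -
      have "\<eta> * K = \<bar>b\<bar> * m * (K / (2 * (K + 1)))" by (simp add: \<eta>_def field_simps)
      also have "\<dots> < \<bar>b\<bar> * m * 1" using bm K0 by (intro mult_strict_left_mono) (auto simp: field_simps)
      finally show ?thesis by simp
    qed
    with main[OF \<eta>0] show False by simp
  qed
qed

lemma partial_linear:
  fixes w :: "real^'n::finite \<Rightarrow> 'a::real_normed_vector"
  assumes T: "bounded_linear T" and d: "w differentiable (at x)"
  shows "partial i (\<lambda>x. T (w x)) x = T (partial i w x)"
proof -
  have "((\<lambda>x. T (w x)) has_derivative (\<lambda>h. T (frechet_derivative w (at x) h))) (at x)"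
    using bounded_linear.has_derivative[OF T has_derivative_frechet[OF d]] .
  from partial_eq[OF this] show ?thesis by (simp add: partial_def)
qed

lemma Ck_linear:
  fixes w :: "real^'n::finite \<Rightarrow> 'a::real_normed_vector" and T :: "'a \<Rightarrow> 'b::real_normed_vector"
  assumes T: "bounded_linear T"
  shows "Ck k w UNIV \<Longrightarrow> Ck k (\<lambda>x. T (w x)) UNIV"
proof (induction k arbitrary: w)
  case 0 then show ?case using bounded_linear.continuous_on[OF T] by simp
next
  case (Suc k)
  then have c: "continuous_on UNIV w" and d: "\<And>x. w differentiable (at x)"
    and p: "\<And>i. Ck k (partial i w) UNIV" by auto
  have pe: "partial i (\<lambda>x. T (w x)) = (\<lambda>x. T (partial i w x))" for i
    using partial_linear[OF T d] by auto
  have "(\<lambda>x. T (w x)) differentiable (at x)" for x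
    using bounded_linear.has_derivative[OF T has_derivative_frechet[OF d[of x]]] differentiableI by blast
  then show ?case using bounded_linear.continuous_on[OF T c] Suc.IH[OF p] by (simp add: pe)
qed

lemma partial_add:
  fixes w v :: "real^'n::finite \<Rightarrow> 'a::real_normed_vector"
  assumes "w differentiable (at x)" "v differentiable (at x)"
  shows "partial i (\<lambda>x. w x + v x) x = partial i w x + partial i v x"
proof -
  have "((\<lambda>x. w x + v x) has_derivative (\<lambda>h. frechet_derivative w (at x) h + frechet_derivative v (at x) h)) (at x)"
    using has_derivative_add[OF has_derivative_frechet[OF assms(1)] has_derivative_frechet[OF assms(2)]] .
  from partial_eq[OF this] show ?thesis by (simp add: partial_def)
qed

lemma Ck_add:
  fixes w v :: "real^'n::finite \<Rightarrow> 'a::real_normed_vector"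
  shows "Ck k w UNIV \<Longrightarrow> Ck k v UNIV \<Longrightarrow> Ck k (\<lambda>x. w x + v x) UNIV"
proof (induction k arbitrary: w v)
  case 0 then show ?case by (simp add: continuous_on_add)
next
  case (Suc k)
  then have c: "continuous_on UNIV w" "continuous_on UNIV v" and d: "\<And>x. w differentiable (at x)" "\<And>x. v differentiable (at x)"
    and p: "\<And>i. Ck k (partial i w) UNIV" "\<And>i. Ck k (partial i v) UNIV" by auto
  have pe: "partial i (\<lambda>x. w x + v x) = (\<lambda>x. partial i w x + partial i v x)" for i
    using partial_add[OF d(1) d(2)] by auto
  have "(\<lambda>x. w x + v x) differentiable (at x)" for x using d by auto
  then show ?case using continuous_on_add[OF c] Suc.IH[OF p(1) p(2)] by (simp add: pe)
qed

lemma Ck2_diff: "Ck 2 w UNIV \<Longrightarrow> w differentiable (at x)" "Ck 2 w UNIV \<Longrightarrow> partial i w differentiable (at x)"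
  by (auto simp: numeral_2_eq_2)

lemma neumann_linear:
  fixes w :: "real^'n::finite \<Rightarrow> 'a::real_normed_vector" and T :: "'a \<Rightarrow> 'b::real_normed_vector"
  assumes T: "bounded_linear T" and n: "neumann_fun \<Omega> \<rho> w"
  shows "neumann_fun \<Omega> \<rho> (\<lambda>x. T (w x))"
    and "laplacian (\<lambda>x. T (w x)) x = T (laplacian w x)"
proof -
  have C: "Ck 2 w UNIV" using n by (simp add: neumann_fun_def)
  have fd: "frechet_derivative (\<lambda>x. T (w x)) (at x) = (\<lambda>h. T (frechet_derivative w (at x) h))" for x
    using frechet_derivative_at[OF bounded_linear.has_derivative[OF T has_derivative_frechet[OF Ck2_diff(1)[OF C]]]] by simp
  show "neumann_fun \<Omega> \<rho> (\<lambda>x. T (w x))"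
    using n Ck_linear[OF T C] unfolding neumann_fun_def fd by (simp add: linear_simps(3)[OF T])
  have pe: "partial i (\<lambda>x. T (w x)) = (\<lambda>x. T (partial i w x))" for i
    using partial_linear[OF T Ck2_diff(1)[OF C]] by auto
  have "laplacian (\<lambda>x. T (w x)) x = (\<Sum>i\<in>UNIV. T (partial i (partial i w) x))"
    unfolding laplacian_def pe using partial_linear[OF T Ck2_diff(2)[OF C]] by simp
  also have "\<dots> = T (laplacian w x)" unfolding laplacian_def
    by (simp add: linear_sum[OF bounded_linear.linear[OF T]])
  finally show "laplacian (\<lambda>x. T (w x)) x = T (laplacian w x)" .
qed

lemma neumann_add:
  fixes w v :: "real^'n::finite \<Rightarrow> 'a::real_normed_vector"
  assumes nw: "neumann_fun \<Omega> \<rho> w" and nv: "neumann_fun \<Omega> \<rho> v"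
  shows "neumann_fun \<Omega> \<rho> (\<lambda>x. w x + v x)"
    and "laplacian (\<lambda>x. w x + v x) x = laplacian w x + laplacian v x"
proof -
  have C: "Ck 2 w UNIV" "Ck 2 v UNIV" using nw nv by (auto simp: neumann_fun_def)
  have fd: "frechet_derivative (\<lambda>x. w x + v x) (at x) = (\<lambda>h. frechet_derivative w (at x) h + frechet_derivative v (at x) h)" for x
    using frechet_derivative_at[OF has_derivative_add[OF has_derivative_frechet[OF Ck2_diff(1)[OF C(1)]] has_derivative_frechet[OF Ck2_diff(1)[OF C(2)]]]] by simp
  show "neumann_fun \<Omega> \<rho> (\<lambda>x. w x + v x)"
    using nw nv Ck_add[OF C] unfolding neumann_fun_def fd by simp
  have pe: "partial i (\<lambda>x. w x + v x) = (\<lambda>x. partial i w x + partial i v x)" for i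
    using partial_add[OF Ck2_diff(1)[OF C(1)] Ck2_diff(1)[OF C(2)]] by auto
  show "laplacian (\<lambda>x. w x + v x) x = laplacian w x + laplacian v x"
    unfolding laplacian_def pe
    using partial_add[OF Ck2_diff(2)[OF C(1)] Ck2_diff(2)[OF C(2)]] by (simp add: sum.distrib)
qed

lemma neumann_lc:
  fixes w1 w2 :: "real^'n::finite \<Rightarrow> complex"
  assumes "neumann_fun \<Omega> \<rho> w1" "neumann_fun \<Omega> \<rho> w2"
  shows "neumann_fun \<Omega> \<rho> (\<lambda>x. a * w1 x + b * w2 x)"
    and "laplacian (\<lambda>x. a * w1 x + b * w2 x) x = a * laplacian w1 x + b * laplacian w2 x"
proof -
  have n1: "neumann_fun \<Omega> \<rho> (\<lambda>x. a * w1 x)" "laplacian (\<lambda>x. a * w1 x) x = a * laplacian w1 x"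
    using neumann_linear[OF bounded_linear_mult_right assms(1)] by auto
  have n2: "neumann_fun \<Omega> \<rho> (\<lambda>x. b * w2 x)" "laplacian (\<lambda>x. b * w2 x) x = b * laplacian w2 x"
    using neumann_linear[OF bounded_linear_mult_right assms(2)] by auto
  show "neumann_fun \<Omega> \<rho> (\<lambda>x. a * w1 x + b * w2 x)" by (rule neumann_add(1)[OF n1(1) n2(1)])
  show "laplacian (\<lambda>x. a * w1 x + b * w2 x) x = a * laplacian w1 x + b * laplacian w2 x"
    using neumann_add(2)[OF n1(1) n2(1)] n1(2) n2(2) by simp
qed

lemma alg_reduce:
  fixes w1 w2 :: "real^'n::finite \<Rightarrow> complex"
  assumes n1: "neumann_fun \<Omega> \<rho> w1" and n2: "neumann_fun \<Omega> \<rho> w2"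
    and nz: "\<exists>x\<in>\<Omega>. w1 x \<noteq> 0 \<or> w2 x \<noteq> 0"
    and e1: "\<And>x. x \<in> \<Omega> \<Longrightarrow> laplacian w1 x = m11 * w1 x + m12 * w2 x"
    and e2: "\<And>x. x \<in> \<Omega> \<Longrightarrow> laplacian w2 x = m21 * w1 x + m22 * w2 x"
  shows "\<exists>\<kappa> u. neumann_fun \<Omega> \<rho> u \<and> (\<exists>x\<in>\<Omega>. u x \<noteq> 0) \<and> (\<forall>x\<in>\<Omega>. laplacian u x = \<kappa> * u x)
           \<and> \<kappa>\<^sup>2 - (m11 + m22) * \<kappa> + (m11 * m22 - m12 * m21) = 0"
proof -
  define t where "t = m11 + m22"
  define dd where "dd = m11 * m22 - m12 * m21"
  define k1 where "k1 = (t + csqrt (t\<^sup>2 - 4 * dd)) / 2"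
  define k2 where "k2 = (t - csqrt (t\<^sup>2 - 4 * dd)) / 2"
  have s: "k1 + k2 = t" by (simp add: k1_def k2_def field_simps)
  have pr: "k1 * k2 = dd"
  proof -
    have "k1 * k2 = (t\<^sup>2 - (csqrt (t\<^sup>2 - 4 * dd))\<^sup>2) / 4"
      by (simp add: k1_def k2_def field_simps power2_eq_square)
    then show ?thesis by simp
  qed
  have root: "k\<^sup>2 - t * k + dd = 0" if "k = k1 \<or> k = k2" for k
  proof -
    have "k\<^sup>2 - t * k + dd = (k - k1) * (k - k2)"
      using s pr by (simp add: algebra_simps power2_eq_square flip: s pr)
    then show ?thesis using that by auto
  qed
  define U1 where "U1 x = (m11 - k2) * w1 x + m12 * w2 x" for x
  define U2 where "U2 x = m21 * w1 x + (m22 - k2) * w2 x" for x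
  have nU1: "neumann_fun \<Omega> \<rho> U1" unfolding U1_def[abs_def] by (rule neumann_lc(1)[OF n1 n2])
  have nU2: "neumann_fun \<Omega> \<rho> U2" unfolding U2_def[abs_def] by (rule neumann_lc(1)[OF n1 n2])
  have lU1: "laplacian U1 x = k1 * U1 x" if "x \<in> \<Omega>" for x
  proof -
    have "laplacian U1 x = (m11 - k2) * (m11 * w1 x + m12 * w2 x) + m12 * (m21 * w1 x + m22 * w2 x)"
      unfolding U1_def[abs_def] neumann_lc(2)[OF n1 n2] using e1[OF that] e2[OF that] by simp
    also have "\<dots> = k1 * U1 x"
      using s pr unfolding U1_def t_def dd_def by algebra
    finally show ?thesis .
  qed
  have lU2: "laplacian U2 x = k1 * U2 x" if "x \<in> \<Omega>" for x
  proof -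
    have "laplacian U2 x = m21 * (m11 * w1 x + m12 * w2 x) + (m22 - k2) * (m21 * w1 x + m22 * w2 x)"
      unfolding U2_def[abs_def] neumann_lc(2)[OF n1 n2] using e1[OF that] e2[OF that] by simp
    also have "\<dots> = k1 * U2 x"
      using s pr unfolding U2_def t_def dd_def by algebra
    finally show ?thesis .
  qed
  have r1: "k1\<^sup>2 - (m11 + m22) * k1 + (m11 * m22 - m12 * m21) = 0" using root[of k1] by (simp add: t_def dd_def)
  have r2: "k2\<^sup>2 - (m11 + m22) * k2 + (m11 * m22 - m12 * m21) = 0" using root[of k2] by (simp add: t_def dd_def)
  show ?thesis
  proof (cases "\<exists>x\<in>\<Omega>. U1 x \<noteq> 0")
    case True then show ?thesis using nU1 lU1 r1 by blast
  next
    case F1: False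
    show ?thesis
    proof (cases "\<exists>x\<in>\<Omega>. U2 x \<noteq> 0")
      case True then show ?thesis using nU2 lU2 r1 by blast
    next
      case False
      have l1: "laplacian w1 x = k2 * w1 x" if "x \<in> \<Omega>" for x
      proof -
        have "U1 x = 0" using F1 that by auto
        then show ?thesis using e1[OF that] unfolding U1_def by (simp add: algebra_simps)
      qed
      have l2: "laplacian w2 x = k2 * w2 x" if "x \<in> \<Omega>" for x
      proof -
        have "U2 x = 0" using False that by auto
        then show ?thesis using e2[OF that] unfolding U2_def by (simp add: algebra_simps)
      qed
      obtain x where x: "x \<in> \<Omega>" "w1 x \<noteq> 0 \<or> w2 x \<noteq> 0" using nz by blast
      show ?thesis
      proof (cases "w1 x \<noteq> 0")
        case True then show ?thesis using n1 l1 r2 x(1) by blast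
      next
        case False then show ?thesis using n2 l2 r2 x by blast
      qed
    qed
  qed
qed

lemma cplx_eig:
  fixes u :: "real^'n::finite \<Rightarrow> complex"
  assumes dom: "smooth_domain \<Omega> \<rho>" and spec: "neumann_eigenvalues \<Omega> \<rho> \<mu>"
    and nu: "neumann_fun \<Omega> \<rho> u" and nz: "\<exists>x\<in>\<Omega>. u x \<noteq> 0"
    and lu: "\<And>x. x \<in> \<Omega> \<Longrightarrow> laplacian u x = \<kappa> * u x"
  shows "\<exists>i. \<kappa> = - complex_of_real (\<mu> i)"
proof -
  define p where "p x = Re (u x)" for x
  define q where "q x = Im (u x)" for x
  have np: "neumann_fun \<Omega> \<rho> p" and lp: "\<And>x. laplacian p x = Re (laplacian u x)"
    unfolding p_def[abs_def] using neumann_linear[OF bounded_linear_Re nu] by auto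
  have nq: "neumann_fun \<Omega> \<rho> q" and lq: "\<And>x. laplacian q x = Im (laplacian u x)"
    unfolding q_def[abs_def] using neumann_linear[OF bounded_linear_Im nu] by auto
  have lp': "laplacian p x = Re \<kappa> * p x - Im \<kappa> * q x" if "x \<in> \<Omega>" for x
    using lp[of x] lu[OF that] by (simp add: p_def q_def)
  have lq': "laplacian q x = Im \<kappa> * p x + Re \<kappa> * q x" if "x \<in> \<Omega>" for x
    using lq[of x] lu[OF that] by (simp add: p_def q_def)
  obtain x0 where x0: "x0 \<in> \<Omega>" "u x0 \<noteq> 0" using nz by blast
  have pq: "p x0 \<noteq> 0 \<or> q x0 \<noteq> 0" using x0(2) by (auto simp: p_def q_def complex_eq_iff)
  have im: "Im \<kappa> = 0" by (rule imag_zero[OF dom np nq lp' lq']) (use x0 pq in auto)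
  have ef: "neumann_eigenfun \<Omega> \<rho> (- Re \<kappa>) p" "neumann_eigenfun \<Omega> \<rho> (- Re \<kappa>) q"
    unfolding neumann_eigenfun_def using np nq lp' lq' im by auto
  have "\<exists>w. neumann_eigenfun \<Omega> \<rho> (- Re \<kappa>) w \<and> (\<exists>x\<in>\<Omega>. w x \<noteq> 0)"
    using ef pq x0(1) by blast
  then obtain i where "\<mu> i = - Re \<kappa>" using spec unfolding neumann_eigenvalues_def by blast
  then have "\<kappa> = - complex_of_real (\<mu> i)" using im by (simp add: complex_eq_iff)
  then show ?thesis by blast
qed

lemma quad_re_neg:
  fixes \<xi> :: complex and T D :: real
  assumes "T < 0" "D > 0" "\<xi>\<^sup>2 - of_real T * \<xi> + of_real D = 0"
  shows "Re \<xi> < 0"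
proof -
  define x where "x = Re \<xi>"
  define y where "y = Im \<xi>"
  have re: "x * x - y * y - T * x + D = 0" and im: "2 * x * y - T * y = 0"
    using assms(3) unfolding x_def y_def complex_eq_iff by (simp_all add: power2_eq_square algebra_simps)
  show ?thesis
  proof (cases "y = 0")
    case True
    show ?thesis
    proof (rule ccontr)
      assume "\<not> Re \<xi> < 0"
      then have "0 \<le> x" by (simp add: x_def)
      then have "0 \<le> x * x" "T * x \<le> 0" using assms(1) by (auto intro: mult_nonpos_nonneg)
      moreover have "x * x - T * x + D = 0" using re True by simp
      ultimately show False using assms(2) by linarith
    qed
  next
    case False
    then have "2 * x = T" using im by (metis (no_types) left_diff_distrib mult.commute mult_eq_0_iff eq_iff_diff_eq_0 mult.assoc)
    then show ?thesis using assms(1) by (simp add: x_def)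
  qed
qed

lemma stable_gen:
  fixes \<Omega> :: "(real^'n::finite) set" and \<mu> :: "nat \<Rightarrow> real" and d1 d2 a11 a12 a21 a22 :: real
  assumes dom: "smooth_domain \<Omega> \<rho>" and spec: "neumann_eigenvalues \<Omega> \<rho> \<mu>"
    and d: "d1 > 0" "d2 > 0"
    and Tneg: "\<And>i. a11 + a22 - (d1 + d2) * \<mu> i < 0"
    and Dpos: "\<And>i. (a11 - d1 * \<mu> i) * (a22 - d2 * \<mu> i) - a12 * a21 > 0"
  shows "L_stable \<Omega> \<rho> d1 d2 a11 a12 a21 a22"
  unfolding L_stable_def
proof (intro allI impI)
  fix \<xi> assume "L_eigenvalue \<Omega> \<rho> d1 d2 a11 a12 a21 a22 \<xi>"
  then obtain w1 w2 :: "real^'n \<Rightarrow> complex" where n1: "neumann_fun \<Omega> \<rho> w1" and n2: "neumann_fun \<Omega> \<rho> w2"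
    and nz: "\<exists>x\<in>\<Omega>. w1 x \<noteq> 0 \<or> w2 x \<noteq> 0"
    and e1: "\<forall>x\<in>\<Omega>. of_real d1 * laplacian w1 x + of_real a11 * w1 x + of_real a12 * w2 x = \<xi> * w1 x"
    and e2: "\<forall>x\<in>\<Omega>. of_real a21 * w1 x + of_real d2 * laplacian w2 x + of_real a22 * w2 x = \<xi> * w2 x"
    unfolding L_eigenvalue_def by blast
  define m11 where "m11 = (\<xi> - of_real a11) / of_real d1"
  define m12 where "m12 = - of_real a12 / (of_real d1 :: complex)"
  define m21 where "m21 = - of_real a21 / (of_real d2 :: complex)"
  define m22 where "m22 = (\<xi> - of_real a22) / of_real d2"
  have d1c: "(of_real d1 :: complex) \<noteq> 0" and d2c: "(of_real d2 :: complex) \<noteq> 0" using d by auto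
  have l1: "laplacian w1 x = m11 * w1 x + m12 * w2 x" if "x \<in> \<Omega>" for x
  proof -
    have h: "of_real d1 * laplacian w1 x + of_real a11 * w1 x + of_real a12 * w2 x = \<xi> * w1 x" using e1 that by blast
    have A: "of_real d1 * (m11 * w1 x + m12 * w2 x) = (\<xi> - of_real a11) * w1 x - of_real a12 * w2 x"
      using d1c by (simp add: m11_def m12_def field_simps)
    have B: "of_real d1 * laplacian w1 x = (\<xi> - of_real a11) * w1 x - of_real a12 * w2 x"
      using h by (simp add: algebra_simps)
    show ?thesis using A B d1c by (metis mult_left_cancel)
  qed
  have l2: "laplacian w2 x = m21 * w1 x + m22 * w2 x" if "x \<in> \<Omega>" for x
  proof -
    have h: "of_real a21 * w1 x + of_real d2 * laplacian w2 x + of_real a22 * w2 x = \<xi> * w2 x" using e2 that by blast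
    have A: "of_real d2 * (m21 * w1 x + m22 * w2 x) = (\<xi> - of_real a22) * w2 x - of_real a21 * w1 x"
      using d2c by (simp add: m21_def m22_def field_simps)
    have B: "of_real d2 * laplacian w2 x = (\<xi> - of_real a22) * w2 x - of_real a21 * w1 x"
      using h by (simp add: algebra_simps)
    show ?thesis using A B d2c by (metis mult_left_cancel)
  qed
  obtain \<kappa> u where u: "neumann_fun \<Omega> \<rho> u" "\<exists>x\<in>\<Omega>. u x \<noteq> 0" "\<forall>x\<in>\<Omega>. laplacian u x = \<kappa> * u x"
    and ch: "\<kappa>\<^sup>2 - (m11 + m22) * \<kappa> + (m11 * m22 - m12 * m21) = 0"
    using alg_reduce[OF n1 n2 nz l1 l2] by blast
  obtain i where k: "\<kappa> = - of_real (\<mu> i)" using cplx_eig[OF dom spec u(1) u(2)] u(3) by blast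
  define T where "T = a11 + a22 - (d1 + d2) * \<mu> i"
  define D where "D = (a11 - d1 * \<mu> i) * (a22 - d2 * \<mu> i) - a12 * a21"
  have "\<xi>\<^sup>2 - of_real T * \<xi> + of_real D = of_real d1 * of_real d2 * (\<kappa>\<^sup>2 - (m11 + m22) * \<kappa> + (m11 * m22 - m12 * m21))"
    unfolding k T_def D_def m11_def m12_def m21_def m22_def using d1c d2c
    by (simp add: field_simps power2_eq_square)
  then have eq: "\<xi>\<^sup>2 - of_real T * \<xi> + of_real D = 0" using ch by simp
  have T0: "T < 0" using Tneg by (simp add: T_def)
  have D0: "D > 0" using Dpos by (simp add: D_def)
  show "Re \<xi> < 0" by (rule quad_re_neg[OF T0 D0 eq])
qed

lemma unstable_gen:
  fixes \<Omega> :: "(real^'n::finite) set" and \<mu> :: "nat \<Rightarrow> real" and d1 d2 a11 a12 a21 a22 :: real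
  assumes spec: "neumann_eigenvalues \<Omega> \<rho> \<mu>"
    and a12: "a12 \<noteq> 0"
    and Dneg: "(a11 - d1 * \<mu> i) * (a22 - d2 * \<mu> i) - a12 * a21 < 0"
  shows "L_unstable \<Omega> \<rho> d1 d2 a11 a12 a21 a22"
proof -
  define m where "m = \<mu> i"
  define T where "T = a11 + a22 - (d1 + d2) * m"
  define D where "D = (a11 - d1 * m) * (a22 - d2 * m) - a12 * a21"
  have D0: "D < 0" using Dneg by (simp add: D_def m_def)
  define s where "s = sqrt (T\<^sup>2 - 4 * D)"
  have "0 \<le> T\<^sup>2" by simp
  then have nn: "0 \<le> T\<^sup>2 - 4 * D" using D0 by linarith
  have s2: "s\<^sup>2 = T\<^sup>2 - 4 * D" unfolding s_def using nn by (rule real_sqrt_pow2)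
  have "\<bar>T\<bar> < s" unfolding s_def using D0 by (intro real_less_rsqrt) (simp add: power2_abs)
  then have sp: "0 < T + s" by linarith
  define r where "r = (T + s) / 2"
  have r0: "0 < r" using sp by (simp add: r_def)
  have rq: "r * r - T * r + D = 0"
  proof -
    have "4 * (r * r - T * r + D) = s\<^sup>2 - T\<^sup>2 + 4 * D" by (simp add: r_def power2_eq_square field_simps)
    then show ?thesis using s2 by simp
  qed
  obtain w where w: "neumann_eigenfun \<Omega> \<rho> m w" "\<exists>x\<in>\<Omega>. w x \<noteq> 0"
    using spec unfolding neumann_eigenvalues_def m_def by blast
  have nw: "neumann_fun \<Omega> \<rho> w" and lw: "\<And>x. x \<in> \<Omega> \<Longrightarrow> laplacian w x = - m * w x"
    using w(1) unfolding neumann_eigenfun_def by auto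
  define c1 where "c1 = a12"
  define c2 where "c2 = r - a11 + d1 * m"
  define w1 where "w1 x = complex_of_real (c1 * w x)" for x
  define w2 where "w2 x = complex_of_real (c2 * w x)" for x
  have bl: "bounded_linear (\<lambda>t. complex_of_real (c * t))" for c :: real
    by (rule bounded_linear_compose[OF bounded_linear_of_real bounded_linear_mult_right])
  have n1: "neumann_fun \<Omega> \<rho> w1" "laplacian w1 x = complex_of_real (c1 * laplacian w x)" for x
    unfolding w1_def[abs_def] using neumann_linear[OF bl nw] by auto
  have n2: "neumann_fun \<Omega> \<rho> w2" "laplacian w2 x = complex_of_real (c2 * laplacian w x)" for x
    unfolding w2_def[abs_def] using neumann_linear[OF bl nw] by auto
  have eq1: "d1 * (c1 * (- m * w x)) + a11 * (c1 * w x) + a12 * (c2 * w x) = r * (c1 * w x)" for x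
    by (simp add: c1_def c2_def algebra_simps)
  have eq2: "a21 * (c1 * w x) + d2 * (c2 * (- m * w x)) + a22 * (c2 * w x) = r * (c2 * w x)" for x
  proof -
    have "a21 * c1 + d2 * (c2 * (- m)) + a22 * c2 - r * c2 = - (r * r - T * r + D)"
      by (simp add: c1_def c2_def T_def D_def algebra_simps)
    then have "a21 * c1 + d2 * (c2 * (- m)) + a22 * c2 = r * c2" using rq by simp
    then have "(a21 * c1 + d2 * (c2 * (- m)) + a22 * c2) * w x = (r * c2) * w x" by simp
    then show ?thesis by (simp add: algebra_simps)
  qed
  have "L_eigenvalue \<Omega> \<rho> d1 d2 a11 a12 a21 a22 (complex_of_real r)"
    unfolding L_eigenvalue_def
  proof (intro exI conjI)
    show "neumann_fun \<Omega> \<rho> w1" "neumann_fun \<Omega> \<rho> w2" using n1 n2 by auto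
    show "\<exists>x\<in>\<Omega>. w1 x \<noteq> 0 \<or> w2 x \<noteq> 0" using w(2) a12 by (auto simp: w1_def c1_def)
    show "\<forall>x\<in>\<Omega>. of_real d1 * laplacian w1 x + of_real a11 * w1 x + of_real a12 * w2 x = complex_of_real r * w1 x"
    proof
      fix x assume x: "x \<in> \<Omega>"
      have "complex_of_real (d1 * (c1 * (- m * w x)) + a11 * (c1 * w x) + a12 * (c2 * w x)) = complex_of_real (r * (c1 * w x))"
        by (simp only: eq1)
      then show "of_real d1 * laplacian w1 x + of_real a11 * w1 x + of_real a12 * w2 x = complex_of_real r * w1 x"
        using n1(2)[of x] lw[OF x] by (simp add: w1_def w2_def)
    qed
    show "\<forall>x\<in>\<Omega>. of_real a21 * w1 x + of_real d2 * laplacian w2 x + of_real a22 * w2 x = complex_of_real r * w2 x"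
    proof
      fix x assume x: "x \<in> \<Omega>"
      have "complex_of_real (a21 * (c1 * w x) + d2 * (c2 * (- m * w x)) + a22 * (c2 * w x)) = complex_of_real (r * (c2 * w x))"
        by (simp only: eq2)
      then show "of_real a21 * w1 x + of_real d2 * laplacian w2 x + of_real a22 * w2 x = complex_of_real r * w2 x"
        using n2(2)[of x] lw[OF x] by (simp add: w1_def w2_def)
    qed
  qed
  then show ?thesis unfolding L_unstable_def using r0 by force
qed

theorem proposition3:
  fixes \<Omega> :: "(real^'n::finite) set" and \<rho> :: "real^'n \<Rightarrow> real" and \<mu> :: "nat \<Rightarrow> real"
    and d1 d2 lam \<sigma> \<delta> \<alpha> :: real
    and \<phi> f g \<phi>' f' g' :: "real \<Rightarrow> real"
  assumes dom: "smooth_domain \<Omega> \<rho>"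
    and spec: "neumann_eigenvalues \<Omega> \<rho> \<mu>"
    and mu0: "\<mu> 0 = 0" and mu1: "0 < \<mu> 1" and mu_lim: "filterlim \<mu> at_top sequentially"
    and pos: "d1 > 0" "d2 > 0" "lam > 0" "\<sigma> > 0"
    and deriv_phi: "\<And>x. x \<ge> 0 \<Longrightarrow> (\<phi> has_real_derivative \<phi>' x) (at x within {0..})"
    and deriv_f: "\<And>x. x \<ge> 0 \<Longrightarrow> (f has_real_derivative f' x) (at x within {0..})"
    and deriv_g: "\<And>x. x \<ge> 0 \<Longrightarrow> (g has_real_derivative g' x) (at x within {0..})"
    and cont_d: "continuous_on {0..} \<phi>'" "continuous_on {0..} f'" "continuous_on {0..} g'"
    and delta: "\<delta> > 0" "\<phi> 0 = 0" "f \<delta> = 0"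
    and on_delta: "\<And>u. 0 < u \<Longrightarrow> u < \<delta> \<Longrightarrow> g u > 0 \<and> f u > 0 \<and> \<phi> u > 0 \<and> g' u \<ge> 0"
    and alpha: "0 < \<alpha>" "\<alpha> < \<delta>" "lam * g \<alpha> = f \<alpha>"
    and alpha_sign: "\<And>u. 0 < u \<Longrightarrow> u < \<delta> \<Longrightarrow> u \<noteq> \<alpha> \<Longrightarrow> (\<alpha> - u) * (f u - lam * g u) > 0"
    and fprime: "0 < f' \<alpha>" "f' \<alpha> < min \<sigma> (lam * g' \<alpha>)"
  shows "((\<mu> 1 * d1 \<ge> (f' \<alpha> * \<phi> \<alpha>) \<or> (\<mu> 1 * d1 < (f' \<alpha> * \<phi> \<alpha>) \<and> 0 < d2 / \<sigma> \<and> d2 / \<sigma> < d_crit (\<phi> \<alpha>) (lam * g' \<alpha> - f' \<alpha>) d1 \<mu> (f' \<alpha> * \<phi> \<alpha>))) \<longrightarrow>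
           L_stable \<Omega> \<rho> d1 d2 (f' \<alpha> * \<phi> \<alpha>) (- lam * \<phi> \<alpha>) (\<sigma> * g' \<alpha> * \<phi> \<alpha>) (- \<sigma> * \<phi> \<alpha>)) \<and>
         ((\<mu> 1 * d1 < (f' \<alpha> * \<phi> \<alpha>) \<and> d_crit (\<phi> \<alpha>) (lam * g' \<alpha> - f' \<alpha>) d1 \<mu> (f' \<alpha> * \<phi> \<alpha>) < d2 / \<sigma>) \<longrightarrow>
           L_unstable \<Omega> \<rho> d1 d2 (f' \<alpha> * \<phi> \<alpha>) (- lam * \<phi> \<alpha>) (\<sigma> * g' \<alpha> * \<phi> \<alpha>) (- \<sigma> * \<phi> \<alpha>))"
proof -
  have mono: "mono \<mu>" using spec by (simp add: neumann_eigenvalues_def)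
  have pa: "\<phi> \<alpha> > 0" using on_delta[OF alpha(1) alpha(2)] by simp
  have lg: "f' \<alpha> < lam * g' \<alpha>" and fs: "f' \<alpha> < \<sigma>" using fprime(2) by auto
  have F0: "0 < f' \<alpha> * \<phi> \<alpha>" using fprime(1) pa by simp
  have lgp: "0 < lam * g' \<alpha>" using lg fprime(1) by linarith
  have mnn: "0 \<le> \<mu> i" for i using mono mu0 by (metis le0 monoD)
  have mpos: "0 < \<mu> i" if "1 \<le> i" for i using mono mu1 that by (metis monoD less_le_trans)
  have a12: "- lam * \<phi> \<alpha> \<noteq> 0" using pos(3) pa by simp
  have Tneg: "f' \<alpha> * \<phi> \<alpha> + - \<sigma> * \<phi> \<alpha> - (d1 + d2) * \<mu> i < 0" for i
  proof -
    have "f' \<alpha> * \<phi> \<alpha> < \<sigma> * \<phi> \<alpha>" using fs pa by simp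
    moreover have "0 \<le> (d1 + d2) * \<mu> i" using pos mnn[of i] by simp
    ultimately show ?thesis by simp
  qed
  have Dform: "(f' \<alpha> * \<phi> \<alpha> - d1 * m) * (- \<sigma> * \<phi> \<alpha> - d2 * m) - - lam * \<phi> \<alpha> * (\<sigma> * g' \<alpha> * \<phi> \<alpha>)
      = \<sigma> * (\<phi> \<alpha> * (m * d1 + \<phi> \<alpha> * (lam * g' \<alpha> - f' \<alpha>))) - d2 * (m * (f' \<alpha> * \<phi> \<alpha> - m * d1))" for m
    by (simp add: algebra_simps)
  define F00 where "F00 = f' \<alpha> * \<phi> \<alpha>"
  define S where "S = {i. 1 \<le> i \<and> (\<forall>j\<in>{1..i}. d1 * \<mu> j < F00)}"
  have ia: "i_alpha d1 \<mu> (f' \<alpha> * \<phi> \<alpha>) = Max S" by (simp add: i_alpha_def S_def F00_def)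
  have finS: "finite S"
  proof -
    have "\<forall>\<^sub>F n in sequentially. F00 / d1 + 1 \<le> \<mu> n" using mu_lim by (simp add: filterlim_at_top)
    then obtain N where N: "\<And>n. n \<ge> N \<Longrightarrow> F00 / d1 + 1 \<le> \<mu> n" by (auto simp: eventually_sequentially)
    have "S \<subseteq> {..N}"
    proof
      fix i assume i: "i \<in> S"
      show "i \<in> {..N}"
      proof (rule ccontr)
        assume "i \<notin> {..N}"
        then have "F00 / d1 + 1 \<le> \<mu> i" using N by auto
        then have "F00 + d1 \<le> d1 * \<mu> i" using pos(1) by (simp add: field_simps)
        moreover have "d1 * \<mu> i < F00" using i by (auto simp: S_def)
        ultimately show False using pos(1) by simp
      qed
    qed
    then show ?thesis by (rule finite_subset) simp
  qed
  have inS: "i \<in> S" if "1 \<le> i" "d1 * \<mu> i < F00" for i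
  proof -
    have "d1 * \<mu> j < F00" if "j \<in> {1..i}" for j
    proof -
      have "\<mu> j \<le> \<mu> i" using that mono by (auto intro: monoD)
      then show ?thesis using \<open>d1 * \<mu> i < F00\<close> pos(1) by (smt (verit) mult_left_mono)
    qed
    then show ?thesis using that(1) by (simp add: S_def)
  qed
  have dcrit_le: "d_crit (\<phi> \<alpha>) (lam * g' \<alpha> - f' \<alpha>) d1 \<mu> (f' \<alpha> * \<phi> \<alpha>) \<le> d_tilde (\<phi> \<alpha>) (lam * g' \<alpha> - f' \<alpha>) d1 \<mu> (f' \<alpha> * \<phi> \<alpha>) i"
    if "1 \<le> i" "d1 * \<mu> i < F00" for i
  proof -
    have "i \<le> Max S" using inS[OF that] finS by simp
    then have "i \<in> {1..i_alpha d1 \<mu> (f' \<alpha> * \<phi> \<alpha>)}" using that(1) ia by simp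
    then show ?thesis unfolding d_crit_def by (intro Min_le) auto
  qed
  show ?thesis
  proof (intro conjI impI)
    assume H: "\<mu> 1 * d1 \<ge> (f' \<alpha> * \<phi> \<alpha>) \<or> (\<mu> 1 * d1 < (f' \<alpha> * \<phi> \<alpha>) \<and> 0 < d2 / \<sigma> \<and> d2 / \<sigma> < d_crit (\<phi> \<alpha>) (lam * g' \<alpha> - f' \<alpha>) d1 \<mu> (f' \<alpha> * \<phi> \<alpha>))"
    show "L_stable \<Omega> \<rho> d1 d2 (f' \<alpha> * \<phi> \<alpha>) (- lam * \<phi> \<alpha>) (\<sigma> * g' \<alpha> * \<phi> \<alpha>) (- \<sigma> * \<phi> \<alpha>)"
    proof (rule stable_gen[OF dom spec pos(1) pos(2)])
      fix i show "f' \<alpha> * \<phi> \<alpha> + - \<sigma> * \<phi> \<alpha> - (d1 + d2) * \<mu> i < 0" by (rule Tneg)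
      show "(f' \<alpha> * \<phi> \<alpha> - d1 * \<mu> i) * (- \<sigma> * \<phi> \<alpha> - d2 * \<mu> i) - - lam * \<phi> \<alpha> * (\<sigma> * g' \<alpha> * \<phi> \<alpha>) > 0"
      proof (cases "i = 0")
        case True
        have "0 < \<sigma> * (\<phi> \<alpha> * (\<phi> \<alpha> * (lam * g' \<alpha> - f' \<alpha>)))" using pos(4) pa lg by simp
        then show ?thesis unfolding Dform using True mu0 by simp
      next
        case False
        then have i1: "1 \<le> i" by simp
        have mi: "0 < \<mu> i" using mpos[OF i1] .
        show ?thesis
        proof (cases "F00 \<le> d1 * \<mu> i")
          case True
          have n1: "f' \<alpha> * \<phi> \<alpha> - d1 * \<mu> i \<le> 0" using True by (simp add: F00_def)
          have p1: "0 < \<sigma> * \<phi> \<alpha>" "0 < d2 * \<mu> i" using pos pa mi by simp_all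
          have n2: "- \<sigma> * \<phi> \<alpha> - d2 * \<mu> i \<le> 0" using p1 by linarith
          have "0 \<le> (f' \<alpha> * \<phi> \<alpha> - d1 * \<mu> i) * (- \<sigma> * \<phi> \<alpha> - d2 * \<mu> i)"
            by (rule mult_nonpos_nonpos[OF n1 n2])
          moreover have "0 < lam * g' \<alpha> * (\<sigma> * \<phi> \<alpha> * \<phi> \<alpha>)" using lgp pos(4) pa by simp
          ultimately show ?thesis by (simp add: algebra_simps)
        next
          case False
          then have lt: "d1 * \<mu> i < F00" by simp
          have "\<not> \<mu> 1 * d1 \<ge> (f' \<alpha> * \<phi> \<alpha>)"
          proof
            assume "\<mu> 1 * d1 \<ge> (f' \<alpha> * \<phi> \<alpha>)"
            moreover have "\<mu> 1 \<le> \<mu> i" using i1 mono by (auto intro: monoD)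
            ultimately have "F00 \<le> d1 * \<mu> i" using pos(1) unfolding F00_def by (smt (verit) mult_left_mono mult.commute)
            then show False using lt by simp
          qed
          then have h: "d2 / \<sigma> < d_crit (\<phi> \<alpha>) (lam * g' \<alpha> - f' \<alpha>) d1 \<mu> (f' \<alpha> * \<phi> \<alpha>)" using H by simp
          have "d2 / \<sigma> < d_tilde (\<phi> \<alpha>) (lam * g' \<alpha> - f' \<alpha>) d1 \<mu> (f' \<alpha> * \<phi> \<alpha>) i"
            using h dcrit_le[OF i1 lt] by simp
          then have h2: "d2 / \<sigma> < \<phi> \<alpha> * (\<mu> i * d1 + \<phi> \<alpha> * (lam * g' \<alpha> - f' \<alpha>)) / (\<mu> i * (f' \<alpha> * \<phi> \<alpha> - \<mu> i * d1))"
            by (simp add: d_tilde_def)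
          have Y: "0 < \<mu> i * (f' \<alpha> * \<phi> \<alpha> - \<mu> i * d1)" using mi lt by (simp add: F00_def mult.commute)
          have "d2 * (\<mu> i * (f' \<alpha> * \<phi> \<alpha> - \<mu> i * d1)) < \<phi> \<alpha> * (\<mu> i * d1 + \<phi> \<alpha> * (lam * g' \<alpha> - f' \<alpha>)) * \<sigma>"
            using h2 Y pos(4) by (simp add: field_simps)
          then show ?thesis unfolding Dform by (simp add: algebra_simps)
        qed
      qed
    qed
  next
    assume H: "\<mu> 1 * d1 < (f' \<alpha> * \<phi> \<alpha>) \<and> d_crit (\<phi> \<alpha>) (lam * g' \<alpha> - f' \<alpha>) d1 \<mu> (f' \<alpha> * \<phi> \<alpha>) < d2 / \<sigma>"
    have "1 \<in> S" using inS[of 1] H by (simp add: F00_def mult.commute)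
    then have SM: "Max S \<in> S" "1 \<le> Max S" using finS by (auto intro: Max_in)
    have Sprop: "\<And>k. k \<in> S \<Longrightarrow> 1 \<le> k \<and> (\<forall>j\<in>{1..k}. d1 * \<mu> j < F00)" by (simp add: S_def)
    have MS: "1 \<le> Max S" "\<forall>j\<in>{1..Max S}. d1 * \<mu> j < F00" using Sprop[OF SM(1)] by auto
    have "d_crit (\<phi> \<alpha>) (lam * g' \<alpha> - f' \<alpha>) d1 \<mu> (f' \<alpha> * \<phi> \<alpha>) \<in> d_tilde (\<phi> \<alpha>) (lam * g' \<alpha> - f' \<alpha>) d1 \<mu> (f' \<alpha> * \<phi> \<alpha>) ` {1..i_alpha d1 \<mu> (f' \<alpha> * \<phi> \<alpha>)}"
      unfolding d_crit_def using MS(1) ia by (intro Min_in) auto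
    then obtain i where i: "i \<in> {1..Max S}" "d_tilde (\<phi> \<alpha>) (lam * g' \<alpha> - f' \<alpha>) d1 \<mu> (f' \<alpha> * \<phi> \<alpha>) i = d_crit (\<phi> \<alpha>) (lam * g' \<alpha> - f' \<alpha>) d1 \<mu> (f' \<alpha> * \<phi> \<alpha>)"
      using ia by auto
    have i1: "1 \<le> i" and lt: "d1 * \<mu> i < F00" using i(1) MS(2) by auto
    have mi: "0 < \<mu> i" using mpos[OF i1] .
    have h2: "\<phi> \<alpha> * (\<mu> i * d1 + \<phi> \<alpha> * (lam * g' \<alpha> - f' \<alpha>)) / (\<mu> i * (f' \<alpha> * \<phi> \<alpha> - \<mu> i * d1)) < d2 / \<sigma>"
      using i(2) H by (simp add: d_tilde_def)
    have Y: "0 < \<mu> i * (f' \<alpha> * \<phi> \<alpha> - \<mu> i * d1)" using mi lt by (simp add: F00_def mult.commute)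
    have "\<phi> \<alpha> * (\<mu> i * d1 + \<phi> \<alpha> * (lam * g' \<alpha> - f' \<alpha>)) * \<sigma> < d2 * (\<mu> i * (f' \<alpha> * \<phi> \<alpha> - \<mu> i * d1))"
      using h2 Y pos(4) by (simp add: field_simps)
    then have Dn: "(f' \<alpha> * \<phi> \<alpha> - d1 * \<mu> i) * (- \<sigma> * \<phi> \<alpha> - d2 * \<mu> i) - - lam * \<phi> \<alpha> * (\<sigma> * g' \<alpha> * \<phi> \<alpha>) < 0"
      unfolding Dform by (simp add: algebra_simps)
    show "L_unstable \<Omega> \<rho> d1 d2 (f' \<alpha> * \<phi> \<alpha>) (- lam * \<phi> \<alpha>) (\<sigma> * g' \<alpha> * \<phi> \<alpha>) (- \<sigma> * \<phi> \<alpha>)"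
      by (rule unstable_gen[OF spec a12 Dn])
  qed
qed

end
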